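(* Let $F$ be a field of characteristic $0$, $d,n\ge1$, and let $G(x_1,\dots,x_{d^2})\in F\langle X\rangle^{\otimes n}$ be a tensor polynomial in the $d^2$ variables $x_1,\dots,x_{d^2}$ which is multilinear and alternating as a function on $M_d(F)^{d^2}$ with values in $M_d(F)^{\otimes n}$. Then there is an element $J_G\in M_d(F)^{\otimes n}$, invariant under the diagonal conjugation action of $GL(d)$ and lying in the linear span $\Sigma_n(F^d)$ of the permutation operators of the tensor factors in $M_d(F)^{\otimes n}=\mathrm{End}((F^d)^{\otimes n})$, such that for all $x_1,\dots,x_{d^2}\in M_d(F)$ $$G(x_1,\dots,x_{d^2})=\det(x_1,\dots,x_{d^2})\,J_G.$$
   Context: $F\langle X\rangle$ is the free associative algebra in $x_1,x_2,\dots$; an element of $F\langle X\rangle^{\otimes n}$ is evaluated on matrices via the algebra homomorphism $F\langle X\rangle^{\otimes n}\to M_d(F)^{\otimes n}$ induced by $x_i\mapsto x_i\in M_d(F)$. For $x_1,\dots,x_{d^2}\in M_d(F)$, $\det(x_1,\dots,x_{d^2})$ is the determinant of the $d^2\times d^2$ matrix whose $i$-th column is the coordinate vector of $x_i$ in the basis of elementary matrices $e_{i,j}$ ordered lexicographically. $S_n$ acts on $(F^d)^{\otimes n}$ by permuting tensor factors, and $GL(d)$ acts diagonally, $g(y_1\otimes\cdots\otimes y_n)=gy_1\otimes\cdots\otimes gy_n$. *)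

theory Defs
  imports "Jordan_Normal_Form.Determinant" "HOL-Combinatorics.Permutations"
begin

text \<open>An element of M_d(F)^{\<otimes>n} = End((F^d)^{\<otimes>n}) is represented by its matrix
 entries, a function T :: nat list \<Rightarrow> nat list \<Rightarrow> 'a, meaningful on
 multi-indices of length n with entries < d.\<close>

definition idx :: "nat \<Rightarrow> nat \<Rightarrow> nat list set" where
  "idx d n = {is. length is = n \<and> set is \<subseteq> {..<d}}"

definition word_mat :: "nat \<Rightarrow> (nat \<Rightarrow> 'a::comm_ring_1 mat) \<Rightarrow> nat list \<Rightarrow> 'a mat" where
  "word_mat d xs w = foldr (\<lambda>v M. xs v * M) w (1\<^sub>m d)"

text \<open>A tensor polynomial in F<X>^{\<otimes>n} is a finitely supported coefficient function
 on n-tuples of words (basis w_1 \<otimes> ... \<otimes> w_n).\<close>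
definition tensor_poly :: "nat \<Rightarrow> nat \<Rightarrow> (nat list list \<Rightarrow> 'a::zero) \<Rightarrow> bool" where
  "tensor_poly d n G \<longleftrightarrow> finite {m. G m \<noteq> 0} \<and>
     (\<forall>m. G m \<noteq> 0 \<longrightarrow> length m = n \<and> (\<forall>w\<in>set m. \<forall>v\<in>set w. v < d * d))"

definition teval :: "nat \<Rightarrow> nat \<Rightarrow> (nat list list \<Rightarrow> 'a::comm_ring_1) \<Rightarrow> (nat \<Rightarrow> 'a mat)
    \<Rightarrow> nat list \<Rightarrow> nat list \<Rightarrow> 'a" where
  "teval d n G xs is js = (\<Sum>m\<in>{m. G m \<noteq> 0}. G m * (\<Prod>k<n. word_mat d xs (m ! k) $$ (is ! k, js ! k)))"

text \<open>Determinant of the d^2 x d^2 matrix whose c-th column is the coordinate vector of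
 xs c in the lexicographically ordered basis e_{i,j} (row index i*d+j).\<close>
definition det_coords :: "nat \<Rightarrow> (nat \<Rightarrow> 'a::comm_ring_1 mat) \<Rightarrow> 'a" where
  "det_coords d xs = det (mat (d * d) (d * d) (\<lambda>(r, c). xs c $$ (r div d, r mod d)))"

definition multilinear_alternating :: "nat \<Rightarrow> nat \<Rightarrow> ((nat \<Rightarrow> 'a::comm_ring_1 mat) \<Rightarrow> nat list \<Rightarrow> nat list \<Rightarrow> 'a) \<Rightarrow> bool" where
  "multilinear_alternating d n f \<longleftrightarrow>
     (\<forall>xs i y z a b. (\<forall>k<d*d. xs k \<in> carrier_mat d d) \<longrightarrow> i < d * d \<longrightarrow>
        y \<in> carrier_mat d d \<longrightarrow> z \<in> carrier_mat d d \<longrightarrow>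
        (\<forall>is\<in>idx d n. \<forall>js\<in>idx d n.
           f (xs(i := a \<cdot>\<^sub>m y + b \<cdot>\<^sub>m z)) is js = a * f (xs(i := y)) is js + b * f (xs(i := z)) is js)) \<and>
     (\<forall>xs i j. (\<forall>k<d*d. xs k \<in> carrier_mat d d) \<longrightarrow> i < d * d \<longrightarrow> j < d * d \<longrightarrow> i \<noteq> j \<longrightarrow>
        xs i = xs j \<longrightarrow> (\<forall>is\<in>idx d n. \<forall>js\<in>idx d n. f xs is js = 0))"

text \<open>Matrix of the operator permuting tensor factors:
 y_1 \<otimes> .. \<otimes> y_n \<mapsto> y_{\<sigma>(1)} \<otimes> .. \<otimes> y_{\<sigma>(n)} (convention irrelevant for the span).\<close>
definition perm_op :: "nat \<Rightarrow> (nat \<Rightarrow> nat) \<Rightarrow> nat list \<Rightarrow> nat list \<Rightarrow> 'a::comm_ring_1" where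
  "perm_op n \<sigma> is js = (if \<forall>k<n. is ! k = js ! \<sigma> k then 1 else 0)"

definition in_perm_span :: "nat \<Rightarrow> nat \<Rightarrow> (nat list \<Rightarrow> nat list \<Rightarrow> 'a::comm_ring_1) \<Rightarrow> bool" where
  "in_perm_span d n J \<longleftrightarrow> (\<exists>c. \<forall>is\<in>idx d n. \<forall>js\<in>idx d n.
      J is js = (\<Sum>\<sigma>\<in>{\<sigma>. \<sigma> permutes {..<n}}. c \<sigma> * perm_op n \<sigma> is js))"

definition tpow :: "nat \<Rightarrow> 'a::comm_ring_1 mat \<Rightarrow> nat list \<Rightarrow> nat list \<Rightarrow> 'a" where
  "tpow n g is js = (\<Prod>k<n. g $$ (is ! k, js ! k))"

definition tmul :: "nat \<Rightarrow> nat \<Rightarrow> (nat list \<Rightarrow> nat list \<Rightarrow> 'a::comm_ring_1) \<Rightarrow> (nat list \<Rightarrow> nat list \<Rightarrow> 'a)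
    \<Rightarrow> nat list \<Rightarrow> nat list \<Rightarrow> 'a" where
  "tmul d n A B is js = (\<Sum>ks\<in>idx d n. A is ks * B ks js)"

definition GL_invariant :: "nat \<Rightarrow> nat \<Rightarrow> (nat list \<Rightarrow> nat list \<Rightarrow> 'a::comm_ring_1) \<Rightarrow> bool" where
  "GL_invariant d n J \<longleftrightarrow> (\<forall>g h. g \<in> carrier_mat d d \<longrightarrow> h \<in> carrier_mat d d \<longrightarrow>
      g * h = 1\<^sub>m d \<longrightarrow> h * g = 1\<^sub>m d \<longrightarrow>
      (\<forall>is\<in>idx d n. \<forall>js\<in>idx d n. tmul d n (tmul d n (tpow n g) J) (tpow n h) is js = J is js))"

end

theory Submission
  imports Defs "Jordan_Normal_Form.Char_Poly" "HOL-Library.FuncSet"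
begin


lemma idx_mem: "is \<in> idx d n \<longleftrightarrow> length is = n \<and> (\<forall>k<n. is ! k < d)"
  unfolding idx_def by (auto simp: in_set_conv_nth subset_iff)

lemma idx_Suc: "idx d (Suc n) = (\<lambda>(a,ks). a # ks) ` ({..<d} \<times> idx d n)"
proof -
 { fix x assume "x \<in> idx d (Suc n)"
  then obtain a ks where "x = a # ks" "length ks = n" "a < d" "set ks \<subseteq> {..<d}"
    unfolding idx_def by (cases x) auto
  then have "x \<in> (\<lambda>(a,ks). a # ks) ` ({..<d} \<times> idx d n)" unfolding idx_def by force }
  moreover have "(\<lambda>(a,ks). a # ks) ` ({..<d} \<times> idx d n) \<subseteq> idx d (Suc n)" by (auto simp: idx_def)
  ultimately show ?thesis by blast
qed

lemma finite_idx[simp]: "finite (idx d n)"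
  by (induct n) (auto simp: idx_Suc, simp add: idx_def)

lemma sum_prod_idx:
  "(\<Sum>ks\<in>idx d n. \<Prod>k<n. F k (ks ! k)) = (\<Prod>k<n. \<Sum>a<d. (F k a :: 'a::comm_semiring_1))"
proof (induct n arbitrary: F)
  case 0
  have "idx d 0 = {[]}" by (auto simp: idx_def)
  then show ?case by simp
next
  case (Suc n)
  have inj: "inj_on (\<lambda>(a,ks). a # ks) ({..<d} \<times> idx d n)" by (auto simp: inj_on_def)
  have "(\<Sum>ks\<in>idx d (Suc n). \<Prod>k<Suc n. F k (ks ! k))
      = (\<Sum>(a,ks)\<in>{..<d} \<times> idx d n. \<Prod>k<Suc n. F k ((a#ks) ! k))"
    unfolding idx_Suc by (subst sum.reindex[OF inj]) (simp add: case_prod_beta)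
  also have "\<dots> = (\<Sum>(a,ks)\<in>{..<d} \<times> idx d n. F 0 a * (\<Prod>k<n. F (Suc k) (ks ! k)))"
    by (rule sum.cong, simp, unfold prod.lessThan_Suc_shift) (simp add: case_prod_beta)
  also have "\<dots> = (\<Sum>a<d. F 0 a) * (\<Sum>ks\<in>idx d n. \<Prod>k<n. F (Suc k) (ks ! k))"
    by (simp add: sum.cartesian_product[symmetric] sum_product)
  also have "\<dots> = (\<Sum>a<d. F 0 a) * (\<Prod>k<n. \<Sum>a<d. F (Suc k) a)" by (simp add: Suc[of "\<lambda>k. F (Suc k)"])
  also have "\<dots> = (\<Prod>k<Suc n. \<Sum>a<d. F k a)" unfolding prod.lessThan_Suc_shift ..
  finally show ?case .
qed

definition act :: "nat \<Rightarrow> (nat \<Rightarrow> nat) \<Rightarrow> nat list \<Rightarrow> nat list" where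
  "act n \<sigma> b = map (\<lambda>k. b ! \<sigma> k) [0..<n]"

lemma act_length[simp]: "length (act n \<sigma> b) = n" by (simp add: act_def)
lemma act_nth[simp]: "k < n \<Longrightarrow> act n \<sigma> b ! k = b ! \<sigma> k" by (simp add: act_def)

lemma perm_less: "\<sigma> permutes {..<n} \<Longrightarrow> i < n \<Longrightarrow> \<sigma> i < n"
  using permutes_in_image by fastforce

lemma act_idx: "\<sigma> permutes {..<n} \<Longrightarrow> b \<in> idx d n \<Longrightarrow> act n \<sigma> b \<in> idx d n"
  unfolding idx_mem using perm_less[of \<sigma> n] by auto

lemma act_act: "\<sigma> permutes {..<n} \<Longrightarrow> act n \<sigma> (act n \<tau> b) = act n (\<tau> \<circ> \<sigma>) b"
  by (rule nth_equalityI) (auto simp: perm_less)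

lemma act_id: "length b = n \<Longrightarrow> act n id b = b"
  by (rule nth_equalityI) auto

lemma act_inv_eq:
  assumes "\<sigma> permutes {..<n}" "length x = n" "length z = n"
  shows "(x = act n \<sigma> z) \<longleftrightarrow> (z = act n (Hilbert_Choice.inv \<sigma>) x)"
proof
  assume "x = act n \<sigma> z"
  then show "z = act n (Hilbert_Choice.inv \<sigma>) x" using assms
    by (intro nth_equalityI) (auto simp: permutes_inverses perm_less permutes_inv)
next
  assume "z = act n (Hilbert_Choice.inv \<sigma>) x"
  then show "x = act n \<sigma> z" using assms
    by (intro nth_equalityI) (auto simp: permutes_inverses perm_less permutes_inv)
qed

lemma perm_op_act: "length x = n \<Longrightarrow> perm_op n \<sigma> x b = (if x = act n \<sigma> b then 1 else 0)"
proof -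
  assume l: "length x = n"
  have "(\<forall>k<n. x ! k = b ! \<sigma> k) \<longleftrightarrow> x = act n \<sigma> b"
  proof
    assume "\<forall>k<n. x ! k = b ! \<sigma> k" then show "x = act n \<sigma> b" using l by (intro nth_equalityI) auto
  qed auto
  then show ?thesis unfolding perm_op_def by simp
qed

lemma tmul_perm_left:
  assumes "\<sigma> permutes {..<n}" "x \<in> idx d n"
  shows "tmul d n (perm_op n \<sigma>) Y x y = Y (act n (Hilbert_Choice.inv \<sigma>) x) y"
proof -
  have "tmul d n (perm_op n \<sigma>) Y x y = (\<Sum>z\<in>idx d n. (if z = act n (Hilbert_Choice.inv \<sigma>) x then Y z y else 0))"
    unfolding tmul_def using assms
    by (intro sum.cong refl) (auto simp: perm_op_act idx_mem act_inv_eq)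
  also have "\<dots> = Y (act n (Hilbert_Choice.inv \<sigma>) x) y"
    using assms by (simp add: act_idx permutes_inv)
  finally show ?thesis .
qed

lemma tmul_perm_right:
  assumes "\<sigma> permutes {..<n}" "y \<in> idx d n"
  shows "tmul d n Y (perm_op n \<sigma>) x y = Y x (act n \<sigma> y)"
proof -
  have "tmul d n Y (perm_op n \<sigma>) x y = (\<Sum>z\<in>idx d n. (if z = act n \<sigma> y then Y x z else 0))"
    unfolding tmul_def using assms
    by (intro sum.cong refl) (auto simp: perm_op_act idx_mem)
  also have "\<dots> = Y x (act n \<sigma> y)"
    using assms by (simp add: act_idx)
  finally show ?thesis .
qed

definition tens :: "nat \<Rightarrow> (nat \<Rightarrow> 'a::comm_ring_1 mat) \<Rightarrow> nat list \<Rightarrow> nat list \<Rightarrow> 'a" where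
  "tens n A x y = (\<Prod>k<n. A k $$ (x ! k, y ! k))"

lemma tpow_tens: "tpow n g = tens n (\<lambda>_. g)"
  by (simp add: tpow_def tens_def fun_eq_iff)

lemma tmul_tens:
  assumes "x \<in> idx d n" "y \<in> idx d n" "\<And>k. k < n \<Longrightarrow> A k \<in> carrier_mat d d"
    "\<And>k. k < n \<Longrightarrow> B k \<in> carrier_mat d d"
  shows "tmul d n (tens n A) (tens n B) x y = tens n (\<lambda>k. A k * B k) x y"
proof -
  have "tmul d n (tens n A) (tens n B) x y = (\<Sum>z\<in>idx d n. \<Prod>k<n. A k $$ (x!k, z!k) * B k $$ (z!k, y!k))"
    unfolding tmul_def tens_def by (simp add: prod.distrib)
  also have "\<dots> = (\<Prod>k<n. \<Sum>a<d. A k $$ (x!k, a) * B k $$ (a, y!k))"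
    by (rule sum_prod_idx)
  also have "\<dots> = tens n (\<lambda>k. A k * B k) x y"
    unfolding tens_def
  proof (rule prod.cong, simp)
    fix k assume k: "k \<in> {..<n}"
    then have "x!k < d" "y!k < d" using assms(1,2) by (auto simp: idx_mem)
    then show "(\<Sum>a<d. A k $$ (x!k, a) * B k $$ (a, y!k)) = (A k * B k) $$ (x!k, y!k)"
      using assms(3,4)[of k] k
      by (auto simp: scalar_prod_def atLeast0LessThan intro!: sum.cong)
  qed
  finally show ?thesis .
qed

lemma tpow_one: "x \<in> idx d n \<Longrightarrow> y \<in> idx d n \<Longrightarrow> tpow n (1\<^sub>m d) x y = (if x = y then 1 else 0)"
proof -
  assume x: "x \<in> idx d n" and y: "y \<in> idx d n"
  have "tpow n (1\<^sub>m d) x y = (\<Prod>k<n. if x!k = y!k then 1 else (0::'a))"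
    unfolding tpow_def using x y by (intro prod.cong) (auto simp: idx_mem)
  also have "\<dots> = (if x = y then 1 else 0)"
  proof (cases "x = y")
    case False
    then obtain k where "k < n" "x!k \<noteq> y!k" using x y by (metis idx_mem nth_equalityI)
    then have "(\<Prod>k<n. if x!k = y!k then 1 else 0) = (0::'a)" by (intro prod_zero) auto
    then show ?thesis using False by simp
  qed simp
  finally show ?thesis .
qed


lemma word_mat_carrier:
  "(\<forall>v\<in>set w. xs v \<in> carrier_mat d d) \<Longrightarrow> word_mat d xs w \<in> carrier_mat d d"
  by (induct w) (auto simp: word_mat_def)

lemma word_mat_conj:
  assumes g: "g \<in> carrier_mat d d" and h: "h \<in> carrier_mat d d" and gh: "g * h = 1\<^sub>m d"
    and hg: "h * g = 1\<^sub>m d" and xs: "\<forall>v\<in>set w. xs v \<in> carrier_mat d d"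
  shows "word_mat d (\<lambda>v. g * xs v * h) w = g * word_mat d xs w * h"
  using xs
proof (induct w)
  case Nil
  then show ?case using g h gh by (simp add: word_mat_def)
next
  case (Cons v w)
  let ?W = "word_mat d xs w"
  have W: "?W \<in> carrier_mat d d" using Cons by (intro word_mat_carrier) auto
  have X: "xs v \<in> carrier_mat d d" using Cons by auto
  have "word_mat d (\<lambda>v. g * xs v * h) (v # w) = (g * xs v * h) * word_mat d (\<lambda>v. g * xs v * h) w"
    by (simp add: word_mat_def)
  also have "\<dots> = (g * xs v * h) * (g * ?W * h)" using Cons by simp
  also have "\<dots> = g * xs v * (h * g) * ?W * h"
    using g h W X by (simp add: assoc_mult_mat[of _ d d _ d _ d])
  also have "\<dots> = g * (xs v * ?W) * h"
    using g h W X hg by (simp add: assoc_mult_mat[of _ d d _ d _ d])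
  also have "\<dots> = g * word_mat d xs (v # w) * h" by (simp add: word_mat_def)
  finally show ?case .
qed

lemma tmul_cong:
  assumes "\<forall>z\<in>idx d n. A x z = A' x z" "\<forall>z\<in>idx d n. B z y = B' z y"
  shows "tmul d n A B x y = tmul d n A' B' x y"
  using assms unfolding tmul_def by auto

lemma tmul_sum_left:
  "tmul d n (\<lambda>a b. \<Sum>m\<in>S. c m * A m a b) B x y = (\<Sum>m\<in>S. c m * tmul d n (A m) B x y)"
  unfolding tmul_def by (simp add: sum_distrib_left sum_distrib_right mult.assoc sum.swap[of _ S])

lemma tmul_sum_right:
  "tmul d n B (\<lambda>a b. \<Sum>m\<in>S. c m * A m a b) x y = (\<Sum>m\<in>S. c m * tmul d n B (A m) x y)"
  unfolding tmul_def by (simp add: sum_distrib_left sum_distrib_right mult.assoc mult.left_commute sum.swap[of _ S])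

lemma teval_tens: "teval d n G xs = (\<lambda>a b. \<Sum>m\<in>{m. G m \<noteq> 0}. G m * tens n (\<lambda>k. word_mat d xs (m ! k)) a b)"
  unfolding teval_def tens_def by simp

lemma tensor_poly_letters:
  assumes "tensor_poly d n G" "G m \<noteq> 0" "k < n" "v \<in> set (m ! k)"
  shows "v < d * d"
  using assms unfolding tensor_poly_def by (metis nth_mem)

lemma teval_conj:
  assumes tp: "tensor_poly d n G" and xs: "\<forall>k<d*d. xs k \<in> carrier_mat d d"
    and g: "g \<in> carrier_mat d d" and h: "h \<in> carrier_mat d d" and gh: "g * h = 1\<^sub>m d"
    and hg: "h * g = 1\<^sub>m d" and x: "x \<in> idx d n" and y: "y \<in> idx d n"
  shows "teval d n G (\<lambda>v. g * xs v * h) x y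
       = tmul d n (tmul d n (tpow n g) (teval d n G xs)) (tpow n h) x y"
proof -
  let ?S = "{m. G m \<noteq> 0}"
  let ?W = "\<lambda>m k. word_mat d xs (m ! k)"
  have Wc: "?W m k \<in> carrier_mat d d" if "m \<in> ?S" "k < n" for m k
    using that tensor_poly_letters[OF tp] xs by (intro word_mat_carrier) auto
  have step1: "tmul d n (tpow n g) (teval d n G xs) a b
      = (\<Sum>m\<in>?S. G m * tens n (\<lambda>k. g * ?W m k) a b)" if "a \<in> idx d n" "b \<in> idx d n" for a b
  proof -
    have "tmul d n (tpow n g) (teval d n G xs) a b = (\<Sum>m\<in>?S. G m * tmul d n (tpow n g) (tens n (?W m)) a b)"
      unfolding teval_tens by (rule tmul_sum_right)
    also have "\<dots> = (\<Sum>m\<in>?S. G m * tens n (\<lambda>k. g * ?W m k) a b)"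
      using that g Wc unfolding tpow_tens by (intro sum.cong refl) (subst tmul_tens[of _ d], auto)
    finally show ?thesis .
  qed
  have "tmul d n (tmul d n (tpow n g) (teval d n G xs)) (tpow n h) x y
      = tmul d n (\<lambda>a b. \<Sum>m\<in>?S. G m * tens n (\<lambda>k. g * ?W m k) a b) (tpow n h) x y"
    using step1 x by (intro tmul_cong) auto
  also have "\<dots> = (\<Sum>m\<in>?S. G m * tmul d n (tens n (\<lambda>k. g * ?W m k)) (tpow n h) x y)"
    by (rule tmul_sum_left)
  also have "\<dots> = (\<Sum>m\<in>?S. G m * tens n (\<lambda>k. g * ?W m k * h) x y)"
    using x y g h Wc unfolding tpow_tens by (intro sum.cong refl) (subst tmul_tens[of _ d], auto)
  also have "\<dots> = (\<Sum>m\<in>?S. G m * tens n (\<lambda>k. word_mat d (\<lambda>v. g * xs v * h) (m ! k)) x y)"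
  proof (intro sum.cong refl arg_cong2[where f="(*)"])
    fix m assume m: "m \<in> ?S"
    show "tens n (\<lambda>k. g * ?W m k * h) x y = tens n (\<lambda>k. word_mat d (\<lambda>v. g * xs v * h) (m ! k)) x y"
      unfolding tens_def
      using m tensor_poly_letters[OF tp] xs
      by (intro prod.cong refl) (subst word_mat_conj[OF g h gh hg], auto)
  qed
  also have "\<dots> = teval d n G (\<lambda>v. g * xs v * h) x y"
    unfolding teval_tens ..
  finally show ?thesis by simp
qed


declare fun_upd_def[simp del]

definition Eb :: "nat \<Rightarrow> nat \<Rightarrow> 'a::comm_ring_1 mat" where
  "Eb d c = mat d d (\<lambda>(i,j). if i = c div d \<and> j = c mod d then 1 else 0)"

lemma Eb_carrier[simp]: "Eb d c \<in> carrier_mat d d" by (simp add: Eb_def)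

lemma divmod_unique:
  fixes i j r d :: nat
  assumes "i < d" "j < d" "r < d * d"
  shows "(i = r div d \<and> j = r mod d) \<longleftrightarrow> r = i * d + j"
  using assms by (auto simp: mult.commute)

lemma sum_divmod_delta:
  fixes i j d :: nat
  assumes "i < d" "j < d"
  shows "(\<Sum>r<d*d. if i = r div d \<and> j = r mod d then F r else 0) = F (i * d + j)"
proof -
  have lt: "i * d + j < d * d"
  proof -
    have "i * d + j < i * d + d" using assms by linarith
    also have "\<dots> = (i + 1) * d" by simp
    also have "\<dots> \<le> d * d" using assms by (intro mult_right_mono) auto
    finally show ?thesis .
  qed
  have "(\<Sum>r<d*d. if i = r div d \<and> j = r mod d then F r else 0) = (\<Sum>r<d*d. if r = i * d + j then F r else 0)"
    using assms by (intro sum.cong refl) (simp add: divmod_unique)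
  also have "\<dots> = F (i * d + j)" using lt by simp
  finally show ?thesis .
qed

lemma mat_expand:
  assumes "A \<in> carrier_mat d d"
  shows "A = mat d d (\<lambda>p. \<Sum>r<d*d. A $$ (r div d, r mod d) * Eb d r $$ p)"
proof (rule eq_matI)
  fix i j assume i: "i < dim_row (mat d d (\<lambda>p. \<Sum>r<d*d. A $$ (r div d, r mod d) * Eb d r $$ p))"
    and j: "j < dim_col (mat d d (\<lambda>p. \<Sum>r<d*d. A $$ (r div d, r mod d) * Eb d r $$ p))"
  then have ij: "i < d" "j < d" by auto
  have "(\<Sum>r<d*d. A $$ (r div d, r mod d) * Eb d r $$ (i,j))
      = (\<Sum>r<d*d. if i = r div d \<and> j = r mod d then A $$ (r div d, r mod d) else 0)"
    using ij by (intro sum.cong refl) (auto simp: Eb_def)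
  also have "\<dots> = A $$ ((i*d+j) div d, (i*d+j) mod d)" using ij by (rule sum_divmod_delta)
  also have "\<dots> = A $$ (i,j)" using ij by simp
  finally show "A $$ (i, j) = mat d d (\<lambda>p. \<Sum>r<d*d. A $$ (r div d, r mod d) * Eb d r $$ p) $$ (i, j)"
    using ij by simp
qed (use assms in auto)

lemma sum_PiE_perm:
  fixes m :: nat
  shows "(\<Sum>f\<in>{f\<in>PiE {..<m} (\<lambda>_. {..<m}). inj_on f {..<m}}. F f)
   = (\<Sum>\<sigma>\<in>{\<sigma>. \<sigma> permutes {..<m}}. F (restrict \<sigma> {..<m}))"
proof (rule sym, rule sum.reindex_bij_witness[where i = "\<lambda>f k. if k < m then f k else k"
      and j = "\<lambda>\<sigma>. restrict \<sigma> {..<m}"])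
  fix \<sigma> assume "\<sigma> \<in> {\<sigma>. \<sigma> permutes {..<m}}"
  then have s: "\<sigma> permutes {..<m}" by simp
  show "(\<lambda>k. if k < m then restrict \<sigma> {..<m} k else k) = \<sigma>"
    using s by (auto simp: fun_eq_iff permutes_not_in)
  have "inj \<sigma>" using permutes_inj[OF s] .
  then show "restrict \<sigma> {..<m} \<in> {f \<in> {..<m} \<rightarrow>\<^sub>E {..<m}. inj_on f {..<m}}"
    using s perm_less[OF s] by (auto simp: inj_on_def dest: injD)
next
  fix f assume "f \<in> {f \<in> {..<m} \<rightarrow>\<^sub>E {..<m}. inj_on f {..<m}}"
  then have f: "f \<in> {..<m} \<rightarrow>\<^sub>E {..<m}" "inj_on f {..<m}" by auto
  show "restrict (\<lambda>k. if k < m then f k else k) {..<m} = f"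
    using f(1) by (auto simp: fun_eq_iff PiE_def extensional_def)
  have im: "f ` {..<m} = {..<m}" using f by (intro endo_inj_surj) auto
  have "bij_betw (\<lambda>k. if k < m then f k else k) {..<m} {..<m}"
    unfolding bij_betw_def using f(2) im
    by (auto simp: inj_on_def image_def)
  then show "(\<lambda>k. if k < m then f k else k) \<in> {\<sigma>. \<sigma> permutes {..<m}}"
    by (auto intro!: bij_imp_permutes split: if_splits)
qed simp

definition lin_alt :: "nat \<Rightarrow> ((nat \<Rightarrow> 'a::comm_ring_1 mat) \<Rightarrow> 'a) \<Rightarrow> bool" where
  "lin_alt d \<phi> \<longleftrightarrow>
     (\<forall>xs i y z a b. (\<forall>k<d*d. xs k \<in> carrier_mat d d) \<longrightarrow> i < d * d \<longrightarrow>
        y \<in> carrier_mat d d \<longrightarrow> z \<in> carrier_mat d d \<longrightarrow>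
           \<phi> (xs(i := a \<cdot>\<^sub>m y + b \<cdot>\<^sub>m z)) = a * \<phi> (xs(i := y)) + b * \<phi> (xs(i := z))) \<and>
     (\<forall>xs i j. (\<forall>k<d*d. xs k \<in> carrier_mat d d) \<longrightarrow> i < d * d \<longrightarrow> j < d * d \<longrightarrow> i \<noteq> j \<longrightarrow>
        xs i = xs j \<longrightarrow> \<phi> xs = 0) \<and>
     (\<forall>xs ys. (\<forall>k<d*d. xs k = ys k) \<longrightarrow> \<phi> xs = \<phi> ys)"

context
  fixes d :: nat and \<phi> :: "(nat \<Rightarrow> 'a::field mat) \<Rightarrow> 'a"
  assumes la: "lin_alt d \<phi>"
begin

lemma la_lin:
  "(\<forall>k<d*d. xs k \<in> carrier_mat d d) \<Longrightarrow> i < d * d \<Longrightarrow> y \<in> carrier_mat d d \<Longrightarrow> z \<in> carrier_mat d d \<Longrightarrow>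
   \<phi> (xs(i := a \<cdot>\<^sub>m y + b \<cdot>\<^sub>m z)) = a * \<phi> (xs(i := y)) + b * \<phi> (xs(i := z))"
  using la unfolding lin_alt_def by blast

lemma la_alt:
  "(\<forall>k<d*d. xs k \<in> carrier_mat d d) \<Longrightarrow> i < d * d \<Longrightarrow> j < d * d \<Longrightarrow> i \<noteq> j \<Longrightarrow> xs i = xs j \<Longrightarrow> \<phi> xs = 0"
  using la unfolding lin_alt_def by blast

lemma la_loc: "(\<forall>k<d*d. xs k = ys k) \<Longrightarrow> \<phi> xs = \<phi> ys"
  using la unfolding lin_alt_def by blast

lemma la_sum:
  assumes fin: "finite R" and ys: "\<forall>k<d*d. ys k \<in> carrier_mat d d" and i: "i < d * d"
    and Y: "\<forall>r\<in>R. Y r \<in> carrier_mat d d"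
  shows "\<phi> (ys(i := mat d d (\<lambda>p. \<Sum>r\<in>R. c r * Y r $$ p))) = (\<Sum>r\<in>R. c r * \<phi> (ys(i := Y r)))"
  using fin Y
proof (induct R rule: finite_induct)
  case empty
  have z: "0 \<cdot>\<^sub>m 0\<^sub>m d d + 0 \<cdot>\<^sub>m 0\<^sub>m d d = (0\<^sub>m d d :: 'a mat)" by auto
  have h0: "\<phi> (ys(i := 0\<^sub>m d d)) = 0" using la_lin[OF ys i, of "0\<^sub>m d d" "0\<^sub>m d d" 0 0] unfolding z by simp
  have e: "mat d d (\<lambda>p. 0) = (0\<^sub>m d d :: 'a mat)"
    by (rule eq_matI) auto
  show ?case unfolding sum.empty e by (fact h0)
next
  case (insert r R)
  have m: "mat d d (\<lambda>p. \<Sum>r\<in>insert r R. c r * Y r $$ p)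
      = c r \<cdot>\<^sub>m Y r + 1 \<cdot>\<^sub>m mat d d (\<lambda>p. \<Sum>r\<in>R. c r * Y r $$ p)"
    using insert by (intro eq_matI) auto
  have "\<phi> (ys(i := mat d d (\<lambda>p. \<Sum>r\<in>insert r R. c r * Y r $$ p)))
      = \<phi> (ys(i := c r \<cdot>\<^sub>m Y r + 1 \<cdot>\<^sub>m mat d d (\<lambda>p. \<Sum>r\<in>R. c r * Y r $$ p)))"
    by (simp only: m)
  also have "\<dots> = c r * \<phi> (ys(i := Y r)) + 1 * \<phi> (ys(i := mat d d (\<lambda>p. \<Sum>r\<in>R. c r * Y r $$ p)))"
    by (rule la_lin[OF ys i]) (use insert in auto)
  also have "\<dots> = c r * \<phi> (ys(i := Y r)) + (\<Sum>r\<in>R. c r * \<phi> (ys(i := Y r)))"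
  proof -
    have IH: "\<phi> (ys(i := mat d d (\<lambda>p. \<Sum>r\<in>R. c r * Y r $$ p))) = (\<Sum>r\<in>R. c r * \<phi> (ys(i := Y r)))"
      using insert(3) insert(4) by blast
    show ?thesis by (simp only: mult.left_neutral IH)
  qed
  also have "\<dots> = (\<Sum>r\<in>insert r R. c r * \<phi> (ys(i := Y r)))"
    by (simp only: sum.insert[OF insert(1,2)])
  finally show ?case .
qed

lemma la_expand:
  assumes xs: "\<forall>k<d*d. xs k \<in> carrier_mat d d" and k: "k \<le> d * d"
  shows "\<phi> xs = (\<Sum>f\<in>PiE {..<k} (\<lambda>_. {..<d*d}).
      (\<Prod>c<k. xs c $$ (f c div d, f c mod d)) * \<phi> (\<lambda>c. if c < k then Eb d (f c) else xs c))"
  using k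
proof (induct k)
  case 0
  then show ?case by simp
next
  case (Suc k)
  let ?N = "d * d"
  let ?M = "\<lambda>r c. xs c $$ (r div d, r mod d)"
  let ?ys = "\<lambda>f c. if c < k then Eb d (f c) else xs c"
  have k: "k < ?N" using Suc by simp
  have ysc: "\<forall>c<?N. ?ys f c \<in> carrier_mat d d" for f using xs by auto
  have one: "\<phi> (?ys f) = (\<Sum>r<?N. ?M r k * \<phi> ((?ys f)(k := Eb d r)))" for f
  proof -
    have "?ys f = (?ys f)(k := mat d d (\<lambda>p. \<Sum>r<?N. ?M r k * Eb d r $$ p))"
      using mat_expand[of "xs k" d] xs k by (auto simp: fun_eq_iff)
    then have "\<phi> (?ys f) = \<phi> ((?ys f)(k := mat d d (\<lambda>p. \<Sum>r<?N. ?M r k * Eb d r $$ p)))" by simp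
    also have "\<dots> = (\<Sum>r<?N. ?M r k * \<phi> ((?ys f)(k := Eb d r)))"
      by (rule la_sum[OF _ ysc k]) auto
    finally show ?thesis .
  qed
  have upd: "(?ys f)(k := Eb d r) = (\<lambda>c. if c < Suc k then Eb d ((f(k := r)) c) else xs c)" for f r
    by (auto simp: fun_eq_iff)
  have "\<phi> xs = (\<Sum>f\<in>PiE {..<k} (\<lambda>_. {..<?N}). (\<Prod>c<k. ?M (f c) c) * \<phi> (?ys f))"
    using Suc by simp
  also have "\<dots> = (\<Sum>f\<in>PiE {..<k} (\<lambda>_. {..<?N}). \<Sum>r<?N.
       (\<Prod>c<Suc k. ?M ((f(k := r)) c) c) * \<phi> (\<lambda>c. if c < Suc k then Eb d ((f(k := r)) c) else xs c))"
  proof (rule sum.cong[OF refl])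
    fix f assume f: "f \<in> PiE {..<k} (\<lambda>_. {..<?N})"
    have pr: "(\<Prod>c<Suc k. ?M ((f(k := r)) c) c) = ?M r k * (\<Prod>c<k. ?M (f c) c)" for r
      by (simp add: prod.lessThan_Suc)
    show "(\<Prod>c<k. ?M (f c) c) * \<phi> (?ys f) = (\<Sum>r<?N.
       (\<Prod>c<Suc k. ?M ((f(k := r)) c) c) * \<phi> (\<lambda>c. if c < Suc k then Eb d ((f(k := r)) c) else xs c))"
      unfolding one pr upd[symmetric] by (simp add: sum_distrib_left mult_ac)
  qed
  also have "\<dots> = (\<Sum>(f,r)\<in>PiE {..<k} (\<lambda>_. {..<?N}) \<times> {..<?N}.
       (\<Prod>c<Suc k. ?M ((f(k := r)) c) c) * \<phi> (\<lambda>c. if c < Suc k then Eb d ((f(k := r)) c) else xs c))"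
    by (simp add: sum.cartesian_product)
  also have "\<dots> = (\<Sum>g\<in>PiE {..<Suc k} (\<lambda>_. {..<?N}).
       (\<Prod>c<Suc k. ?M (g c) c) * \<phi> (\<lambda>c. if c < Suc k then Eb d (g c) else xs c))"
    by (rule sum.reindex_bij_witness[where i = "\<lambda>g. (g(k := undefined), g k)" and j = "\<lambda>(f,r). f(k := r)"])
       (auto simp: PiE_def extensional_def fun_eq_iff Pi_iff less_Suc_eq)
  finally show ?case .
qed

lemma la_swap:
  assumes ys: "\<forall>k<d*d. ys k \<in> carrier_mat d d" and a: "a < d * d" and b: "b < d * d" and ab: "a \<noteq> b"
  shows "\<phi> (ys \<circ> Transposition.transpose a b) = - \<phi> ys"
proof -
  let ?u = "ys a" and ?v = "ys b"
  have u: "?u \<in> carrier_mat d d" and v: "?v \<in> carrier_mat d d" using ys a b by auto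
  let ?W = "1 \<cdot>\<^sub>m ?u + 1 \<cdot>\<^sub>m ?v"
  have W: "?W \<in> carrier_mat d d" using u v by auto
  let ?Z = "\<lambda>p q. (ys(a := p))(b := q)"
  have Zc: "p \<in> carrier_mat d d \<Longrightarrow> q \<in> carrier_mat d d \<Longrightarrow> \<forall>k<d*d. ?Z p q k \<in> carrier_mat d d" for p q
    using ys by auto
  have Z2: "\<phi> (?Z p ?W) = \<phi> (?Z p ?u) + \<phi> (?Z p ?v)" if p: "p \<in> carrier_mat d d" for p
    using la_lin[OF Zc[OF p W] b u v, of 1 1] by (simp only: fun_upd_upd mult.left_neutral)
  have Z1: "\<phi> (?Z ?W q) = \<phi> (?Z ?u q) + \<phi> (?Z ?v q)" if q: "q \<in> carrier_mat d d" for q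
  proof -
    have e: "?Z p q = (ys(b := q))(a := p)" for p using ab by (auto simp: fun_eq_iff)
    have Zc': "\<forall>k<d*d. ((ys(b := q))(a := q)) k \<in> carrier_mat d d" using Zc[OF q q] unfolding e .
    show ?thesis unfolding e using la_lin[OF Zc' a u v, of 1 1]
      by (simp only: fun_upd_upd mult.left_neutral)
  qed
  have "?Z ?W ?W a = ?Z ?W ?W b" using ab by simp
  from la_alt[OF Zc[OF W W] a b ab this] have "0 = \<phi> (?Z ?W ?W)" by (rule sym)
  also have "\<dots> = \<phi> (?Z ?u ?u) + \<phi> (?Z ?u ?v) + (\<phi> (?Z ?v ?u) + \<phi> (?Z ?v ?v))"
    using Z1[OF W] Z2[OF u] Z2[OF v] by simp
  also have "?Z ?u ?u a = ?Z ?u ?u b" using ab by simp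
  from la_alt[OF Zc[OF u u] a b ab this] have "\<phi> (?Z ?u ?u) = 0" .
  also have "?Z ?v ?v a = ?Z ?v ?v b" using ab by simp
  from la_alt[OF Zc[OF v v] a b ab this] have "\<phi> (?Z ?v ?v) = 0" .
  also have "?Z ?u ?v = ys" by (auto simp: fun_eq_iff)
  also have "?Z ?v ?u = ys \<circ> Transposition.transpose a b"
    using ab by (auto simp: fun_eq_iff Transposition.transpose_def)
  finally show ?thesis by (simp add: eq_neg_iff_add_eq_0 add.commute o_def)
qed

lemma la_perm:
  assumes s: "\<sigma> permutes {..<d*d}"
  shows "\<forall>ys. (\<forall>k<d*d. ys k \<in> carrier_mat d d) \<longrightarrow> \<phi> (ys \<circ> \<sigma>) = signof \<sigma> * \<phi> ys"
  using s finite_lessThan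
proof (induct \<sigma> rule: permutes_induct)
  case id
  then show ?case by simp
next
  case (swap a b p)
  show ?case
  proof (intro allI impI)
    fix ys :: "nat \<Rightarrow> 'a mat" assume ys: "\<forall>k<d*d. ys k \<in> carrier_mat d d"
    have ys': "\<forall>k<d*d. (ys \<circ> Transposition.transpose a b) k \<in> carrier_mat d d"
      using ys swap(1,2) by (auto simp: Transposition.transpose_def)
    have "\<phi> (ys \<circ> (Transposition.transpose a b \<circ> p)) = \<phi> ((ys \<circ> Transposition.transpose a b) \<circ> p)"
      by (simp add: o_assoc)
    also have "\<dots> = signof p * \<phi> (ys \<circ> Transposition.transpose a b)" using swap(4) ys' by blast
    also have "\<dots> = signof p * (- \<phi> ys)" using la_swap[OF ys] swap(1-3) by simp
    also have "signof (Transposition.transpose a b \<circ> p) = - (signof p :: 'a)"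
    proof -
      have "permutation p" using swap(5) permutation_permutes by blast
      then have "sign (Transposition.transpose a b \<circ> p) = - sign p"
        using swap(3) by (simp add: sign_compose permutation_swap_id sign_swap_id)
      then show ?thesis by simp
    qed
    ultimately show "\<phi> (ys \<circ> (Transposition.transpose a b \<circ> p)) = signof (Transposition.transpose a b \<circ> p) * \<phi> ys"
      by simp
  qed
qed

lemma la_det:
  assumes xs: "\<forall>k<d*d. xs k \<in> carrier_mat d d"
  shows "\<phi> xs = det_coords d xs * \<phi> (Eb d)"
proof -
  let ?N = "d * d"
  let ?M = "\<lambda>r c. xs c $$ (r div d, r mod d)"
  let ?P = "PiE {..<?N} (\<lambda>_. {..<?N})"
  let ?F = "\<lambda>f. (\<Prod>c<?N. ?M (f c) c) * \<phi> (\<lambda>c. Eb d (f c))"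
  have "\<phi> xs = (\<Sum>f\<in>?P. (\<Prod>c<?N. ?M (f c) c) * \<phi> (\<lambda>c. if c < ?N then Eb d (f c) else xs c))"
    using la_expand[OF xs, of ?N] by simp
  also have "\<dots> = (\<Sum>f\<in>?P. ?F f)"
    by (intro sum.cong refl arg_cong2[where f="(*)"] la_loc) auto
  also have "\<dots> = (\<Sum>f\<in>{f\<in>?P. inj_on f {..<?N}}. ?F f)"
  proof (rule sum.mono_neutral_right)
    show "\<forall>f\<in>?P - {f\<in>?P. inj_on f {..<?N}}. ?F f = 0"
    proof
      fix f assume "f \<in> ?P - {f\<in>?P. inj_on f {..<?N}}"
      then obtain i j where "i < ?N" "j < ?N" "i \<noteq> j" "f i = f j" by (auto simp: inj_on_def)
      then have "\<phi> (\<lambda>c. Eb d (f c)) = 0" by (intro la_alt[of _ i j]) auto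
      then show "?F f = 0" by simp
    qed
  qed (auto intro: finite_PiE)
  also have "\<dots> = (\<Sum>\<sigma>\<in>{\<sigma>. \<sigma> permutes {..<?N}}. ?F (restrict \<sigma> {..<?N}))"
    by (rule sum_PiE_perm)
  also have "\<dots> = (\<Sum>\<sigma>\<in>{\<sigma>. \<sigma> permutes {..<?N}}. signof \<sigma> * (\<Prod>c<?N. ?M (\<sigma> c) c) * \<phi> (Eb d))"
  proof (intro sum.cong refl)
    fix \<sigma> assume "\<sigma> \<in> {\<sigma>. \<sigma> permutes {..<?N}}"
    then have s: "\<sigma> permutes {..<?N}" by simp
    have "\<phi> (\<lambda>c. Eb d (restrict \<sigma> {..<?N} c)) = \<phi> (Eb d \<circ> \<sigma>)" by (intro la_loc) auto
    also have "\<dots> = signof \<sigma> * \<phi> (Eb d)" using la_perm[OF s] by auto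
    finally show "?F (restrict \<sigma> {..<?N}) = signof \<sigma> * (\<Prod>c<?N. ?M (\<sigma> c) c) * \<phi> (Eb d)"
      by simp
  qed
  also have "\<dots> = (\<Sum>\<sigma>\<in>{\<sigma>. \<sigma> permutes {..<?N}}. signof \<sigma> * (\<Prod>c<?N. ?M (\<sigma> c) c)) * \<phi> (Eb d)"
    by (simp add: sum_distrib_right)
  also have "(\<Sum>\<sigma>\<in>{\<sigma>. \<sigma> permutes {..<?N}}. signof \<sigma> * (\<Prod>c<?N. ?M (\<sigma> c) c)) = det_coords d xs"
  proof -
    let ?A = "mat ?N ?N (\<lambda>(r, c). xs c $$ (r div d, r mod d))"
    have "det_coords d xs = det (transpose_mat ?A)" unfolding det_coords_def
      by (rule det_transpose[symmetric]) auto
    also have "\<dots> = (\<Sum>\<sigma>\<in>{\<sigma>. \<sigma> permutes {0..<?N}}. signof \<sigma> * (\<Prod>i=0..<?N. transpose_mat ?A $$ (i, \<sigma> i)))"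
      by (rule det_def') auto
    also have "\<dots> = (\<Sum>\<sigma>\<in>{\<sigma>. \<sigma> permutes {..<?N}}. signof \<sigma> * (\<Prod>c<?N. ?M (\<sigma> c) c))"
      by (intro sum.cong) (auto simp: atLeast0LessThan perm_less intro!: prod.cong arg_cong2[where f="(*)"])
    finally show ?thesis by simp
  qed
  finally show ?thesis .
qed

end


definition coordmat :: "nat \<Rightarrow> (nat \<Rightarrow> 'a::comm_ring_1 mat) \<Rightarrow> 'a mat" where
  "coordmat d xs = mat (d * d) (d * d) (\<lambda>(r, c). xs c $$ (r div d, r mod d))"

lemma det_coords_coordmat: "det_coords d xs = det (coordmat d xs)"
  by (simp add: det_coords_def coordmat_def)

lemma lt_dd: fixes a b d :: nat assumes "a < d" "b < d" shows "a * d + b < d * d"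
proof -
  have le: "a + 1 \<le> d" using assms by linarith
  have "a * d + b < a * d + d" using assms by linarith
  also have "\<dots> = (a + 1) * d" by simp
  also have "\<dots> \<le> d * d" using mult_right_mono[OF le, of d] by simp
  finally show ?thesis .
qed

lemma divmod_lt: fixes d r :: nat assumes "r < d * d" shows "r div d < d" "r mod d < d"
proof -
  have "d > 0" using assms by (cases d) auto
  then show "r div d < d" "r mod d < d" using assms by (auto simp: less_mult_imp_div_less)
qed

lemma sum_divmod:
  fixes d :: nat
  shows "(\<Sum>q<d*d. F (q div d) (q mod d)) = (\<Sum>a<d. \<Sum>b<d. (F a b :: 'a::comm_monoid_add))"
proof -
  have "(\<Sum>a<d. \<Sum>b<d. F a b) = (\<Sum>(a,b)\<in>{..<d} \<times> {..<d}. F a b)"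
    by (simp add: sum.cartesian_product)
  also have "\<dots> = (\<Sum>q<d*d. F (q div d) (q mod d))"
    by (rule sum.reindex_bij_witness[where i = "\<lambda>q. (q div d, q mod d)" and j = "\<lambda>(a,b). a * d + b"])
       (auto simp: divmod_lt lt_dd)
  finally show ?thesis by simp
qed

definition Lm :: "nat \<Rightarrow> 'a::comm_ring_1 mat \<Rightarrow> 'a mat" where
  "Lm d g = mat (d*d) (d*d) (\<lambda>(r,q). g $$ (r div d, q div d) * (if r mod d = q mod d then 1 else 0))"

definition Rm :: "nat \<Rightarrow> 'a::comm_ring_1 mat \<Rightarrow> 'a mat" where
  "Rm d h = mat (d*d) (d*d) (\<lambda>(r,q). (if r div d = q div d then 1 else 0) * h $$ (q mod d, r mod d))"

lemma coordmat_left: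
  assumes g: "g \<in> carrier_mat d d" and xs: "\<forall>c<d*d. xs c \<in> carrier_mat d d"
  shows "coordmat d (\<lambda>c. g * xs c) = Lm d g * coordmat d xs"
proof (rule eq_matI)
  fix r c assume "r < dim_row (Lm d g * coordmat d xs)" "c < dim_col (Lm d g * coordmat d xs)"
  then have r: "r < d*d" and c: "c < d*d" by (auto simp: Lm_def coordmat_def)
  have "(Lm d g * coordmat d xs) $$ (r,c) = (\<Sum>q<d*d. g $$ (r div d, q div d) * (if r mod d = q mod d then 1 else 0) * xs c $$ (q div d, q mod d))"
    using r c by (simp add: Lm_def coordmat_def scalar_prod_def atLeast0LessThan)
  also have "\<dots> = (\<Sum>a<d. \<Sum>b<d. g $$ (r div d, a) * (if r mod d = b then 1 else 0) * xs c $$ (a, b))"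
    by (rule sum_divmod)
  also have "\<dots> = (\<Sum>a<d. \<Sum>b<d. if b = r mod d then g $$ (r div d, a) * xs c $$ (a, b) else 0)"
    by (intro sum.cong refl) auto
  also have "\<dots> = (\<Sum>a<d. g $$ (r div d, a) * xs c $$ (a, r mod d))"
    using divmod_lt[OF r] by simp
  also have "\<dots> = (g * xs c) $$ (r div d, r mod d)"
  proof -
    have xc: "xs c \<in> carrier_mat d d" using xs c by auto
    have "r div d < d" "r mod d < d" using divmod_lt[OF r] by auto
    then show ?thesis using g xc by (simp add: scalar_prod_def atLeast0LessThan)
  qed
  finally show "coordmat d (\<lambda>c. g * xs c) $$ (r, c) = (Lm d g * coordmat d xs) $$ (r, c)"
    using r c by (simp add: coordmat_def)
qed (auto simp: Lm_def coordmat_def)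

lemma coordmat_right:
  assumes h: "h \<in> carrier_mat d d" and xs: "\<forall>c<d*d. xs c \<in> carrier_mat d d"
  shows "coordmat d (\<lambda>c. xs c * h) = Rm d h * coordmat d xs"
proof (rule eq_matI)
  fix r c assume "r < dim_row (Rm d h * coordmat d xs)" "c < dim_col (Rm d h * coordmat d xs)"
  then have r: "r < d*d" and c: "c < d*d" by (auto simp: Rm_def coordmat_def)
  have "(Rm d h * coordmat d xs) $$ (r,c) = (\<Sum>q<d*d. (if r div d = q div d then 1 else 0) * h $$ (q mod d, r mod d) * xs c $$ (q div d, q mod d))"
    using r c by (simp add: Rm_def coordmat_def scalar_prod_def atLeast0LessThan)
  also have "\<dots> = (\<Sum>a<d. \<Sum>b<d. (if r div d = a then 1 else 0) * h $$ (b, r mod d) * xs c $$ (a, b))"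
    by (rule sum_divmod)
  also have "\<dots> = (\<Sum>a<d. if a = r div d then (\<Sum>b<d. h $$ (b, r mod d) * xs c $$ (a, b)) else 0)"
    by (intro sum.cong refl) auto
  also have "\<dots> = (\<Sum>b<d. h $$ (b, r mod d) * xs c $$ (r div d, b))"
    using divmod_lt[OF r] by simp
  also have "\<dots> = (xs c * h) $$ (r div d, r mod d)"
  proof -
    have xc: "xs c \<in> carrier_mat d d" using xs c by auto
    have "r div d < d" "r mod d < d" using divmod_lt[OF r] by auto
    then show ?thesis using h xc by (simp add: scalar_prod_def atLeast0LessThan mult.commute)
  qed
  finally show "coordmat d (\<lambda>c. xs c * h) $$ (r, c) = (Rm d h * coordmat d xs) $$ (r, c)"
    using r c by (simp add: coordmat_def)
qed (auto simp: Rm_def coordmat_def)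

lemma coordmat_Eb: "coordmat d (Eb d) = 1\<^sub>m (d*d)"
proof (rule eq_matI)
  fix r c assume "r < dim_row (1\<^sub>m (d*d))" "c < dim_col (1\<^sub>m (d * d))"
  then have r: "r < d*d" and c: "c < d*d" by auto
  have "(r div d = c div d \<and> r mod d = c mod d) \<longleftrightarrow> r = c"
    by (metis div_mult_mod_eq)
  then show "coordmat d (Eb d) $$ (r, c) = 1\<^sub>m (d * d) $$ (r, c)"
    using r c divmod_lt[OF r] by (auto simp: coordmat_def Eb_def)
qed (auto simp: coordmat_def)

definition blockdiag :: "nat \<Rightarrow> nat \<Rightarrow> 'a::comm_ring_1 mat \<Rightarrow> 'a mat" where
  "blockdiag k d B = mat (k*d) (k*d) (\<lambda>(r,q). if r div d = q div d then B $$ (r mod d, q mod d) else 0)"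

lemma det_blockdiag:
  assumes B: "B \<in> carrier_mat d d"
  shows "det (blockdiag k d (B :: 'a::idom mat)) = det B ^ k"
proof (induct k)
  case 0
  have "blockdiag 0 d B = 1\<^sub>m 0" by (rule eq_matI) (auto simp: blockdiag_def)
  then show ?case by simp
next
  case (Suc k)
  have e: "blockdiag (Suc k) d B = four_block_mat B (0\<^sub>m d (k*d)) (0\<^sub>m (k*d) d) (blockdiag k d B)"
  proof (rule eq_matI)
    fix r q assume "r < dim_row (four_block_mat B (0\<^sub>m d (k*d)) (0\<^sub>m (k*d) d) (blockdiag k d B))"
      "q < dim_col (four_block_mat B (0\<^sub>m d (k*d)) (0\<^sub>m (k*d) d) (blockdiag k d B))"
    then have r: "r < d + k*d" and q: "q < d + k*d" using B by (auto simp: blockdiag_def)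
    have Bc: "dim_row B = d" "dim_col B = d" using B by auto
    show "blockdiag (Suc k) d B $$ (r, q) = four_block_mat B (0\<^sub>m d (k*d)) (0\<^sub>m (k*d) d) (blockdiag k d B) $$ (r, q)"
    proof (cases "r < d")
      case True
      then have rd: "r div d = 0" "r mod d = r" by simp_all
      show ?thesis
      proof (cases "q < d")
        case True
        then have qd: "q div d = 0" "q mod d = q" by simp_all
        show ?thesis using r q \<open>r < d\<close> True rd qd Bc by (simp add: blockdiag_def)
      next
        case False
        have "d > 0" using \<open>r < d\<close> by simp
        then have "q div d \<noteq> 0" using False by (simp add: div_greater_zero_iff)
        then show ?thesis using r q \<open>r < d\<close> False rd Bc by (simp add: blockdiag_def)
      qed
    next
      case False
      have "d > 0" using r False by (cases d) auto
      then have rd: "r div d = Suc ((r - d) div d)" "r mod d = (r - d) mod d" using False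
        by (simp_all add: div_if mod_if)
      show ?thesis
      proof (cases "q < d")
        case True
        then have qd: "q div d = 0" by simp
        show ?thesis using r q \<open>\<not> r < d\<close> True rd qd Bc by (simp add: blockdiag_def)
      next
        case qF: False
        have qd: "q div d = Suc ((q - d) div d)" "q mod d = (q - d) mod d" using qF \<open>d > 0\<close>
          by (simp_all add: div_if mod_if)
        have "r - d < k * d" "q - d < k * d" using r q False qF by auto
        then show ?thesis using r q False qF rd qd Bc by (simp add: blockdiag_def)
      qed
    qed
  qed (use B in \<open>auto simp: blockdiag_def\<close>)
  have "det (blockdiag (Suc k) d B) = det B * det (blockdiag k d B)"
    unfolding e by (rule det_four_block_mat_lower_left_zero[OF B]) (auto simp: blockdiag_def)
  also have "\<dots> = det B * det B ^ k" by (simp only: Suc.hyps)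
  also have "\<dots> = det B ^ Suc k" by (simp only: power_Suc)
  finally show ?case .
qed

lemma Rm_blockdiag: "h \<in> carrier_mat d d \<Longrightarrow> Rm d h = blockdiag d d (transpose_mat h)"
  by (rule eq_matI) (auto simp: Rm_def blockdiag_def divmod_lt)

lemma det_Rm: "h \<in> carrier_mat d d \<Longrightarrow> det (Rm d (h :: 'a::idom mat)) = det h ^ d"
  by (simp add: Rm_blockdiag det_blockdiag det_transpose)

definition sw :: "nat \<Rightarrow> nat \<Rightarrow> nat" where "sw d r = (r mod d) * d + r div d"

lemma sw_props:
  fixes d r :: nat assumes r: "r < d * d"
  shows "sw d r < d * d" "sw d r div d = r mod d" "sw d r mod d = r div d" "sw d (sw d r) = r"
proof -
  have a: "r div d < d" "r mod d < d" using divmod_lt[OF r] by auto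
  show "sw d r < d * d" unfolding sw_def using lt_dd[OF a(2) a(1)] .
  have d0: "d > 0" using a by simp
  show b: "sw d r div d = r mod d" unfolding sw_def using a(1) d0 by simp
  show b2: "sw d r mod d = r div d" unfolding sw_def using a(1) by simp
  show "sw d (sw d r) = r" unfolding sw_def[of d "sw d r"] b b2 by simp
qed

lemma sw_inv: fixes r s d :: nat assumes "r < d * d" "s < d * d" shows "(r = sw d s) \<longleftrightarrow> (s = sw d r)"
  using sw_props(4)[OF assms(1)] sw_props(4)[OF assms(2)] by auto

definition Pm :: "nat \<Rightarrow> 'a::comm_ring_1 mat" where
  "Pm d = mat (d*d) (d*d) (\<lambda>(r,q). if q = sw d r then 1 else 0)"

lemma Pm_left: assumes A: "A \<in> carrier_mat (d*d) (d*d)"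
  shows "Pm d * A = mat (d*d) (d*d) (\<lambda>(r,q). A $$ (sw d r, q))"
proof (rule eq_matI)
  fix r q assume "r < dim_row (mat (d*d) (d*d) (\<lambda>(r,q). A $$ (sw d r, q)))"
    "q < dim_col (mat (d*d) (d*d) (\<lambda>(r,q). A $$ (sw d r, q)))"
  then have r: "r < d*d" and q: "q < d*d" by auto
  have "(Pm d * A) $$ (r,q) = (\<Sum>s<d*d. (if s = sw d r then 1 else 0) * A $$ (s,q))"
    using A r q by (simp add: Pm_def scalar_prod_def atLeast0LessThan)
  also have "\<dots> = (\<Sum>s<d*d. if s = sw d r then A $$ (s,q) else 0)" by (intro sum.cong refl) auto
  also have "\<dots> = A $$ (sw d r, q)" using sw_props[OF r] by simp
  finally show "(Pm d * A) $$ (r, q) = mat (d*d) (d*d) (\<lambda>(r,q). A $$ (sw d r, q)) $$ (r, q)"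
    using r q by simp
qed (use A in \<open>auto simp: Pm_def\<close>)

lemma Pm_right: assumes A: "A \<in> carrier_mat (d*d) (d*d)"
  shows "A * Pm d = mat (d*d) (d*d) (\<lambda>(r,q). A $$ (r, sw d q))"
proof (rule eq_matI)
  fix r q assume "r < dim_row (mat (d*d) (d*d) (\<lambda>(r,q). A $$ (r, sw d q)))"
    "q < dim_col (mat (d*d) (d*d) (\<lambda>(r,q). A $$ (r, sw d q)))"
  then have r: "r < d*d" and q: "q < d*d" by auto
  have "(A * Pm d) $$ (r,q) = (\<Sum>s<d*d. A $$ (r,s) * (if q = sw d s then 1 else 0))"
    using A r q by (simp add: Pm_def scalar_prod_def atLeast0LessThan)
  also have "\<dots> = (\<Sum>s<d*d. if s = sw d q then A $$ (r,s) else 0)"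
    using q by (intro sum.cong refl) (auto simp: sw_inv)
  also have "\<dots> = A $$ (r, sw d q)" using sw_props[OF q] by simp
  finally show "(A * Pm d) $$ (r, q) = mat (d*d) (d*d) (\<lambda>(r,q). A $$ (r, sw d q)) $$ (r, q)"
    using r q by simp
qed (use A in \<open>auto simp: Pm_def\<close>)

lemma det_Lm:
  assumes g: "g \<in> carrier_mat d d"
  shows "det (Lm d (g :: 'a::field mat)) = det g ^ d"
proof -
  have P: "(Pm d :: 'a mat) \<in> carrier_mat (d*d) (d*d)" by (simp add: Pm_def)
  have L: "Lm d g \<in> carrier_mat (d*d) (d*d)" by (simp add: Lm_def)
  have R: "Rm d (transpose_mat g) \<in> carrier_mat (d*d) (d*d)" by (simp add: Rm_def)
  have PP: "Pm d * Pm d = (1\<^sub>m (d*d) :: 'a mat)"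
    unfolding Pm_left[OF P] by (rule eq_matI) (auto simp: Pm_def sw_props)
  have "det (Pm d :: 'a mat) * det (Pm d) = 1" using det_mult[OF P P] PP by simp
  then have P0: "det (Pm d :: 'a mat) \<noteq> 0" by auto
  have comm: "Pm d * Lm d g = Rm d (transpose_mat g) * Pm d"
    unfolding Pm_left[OF L] Pm_right[OF R]
  proof (rule eq_matI)
    fix r q assume "r < dim_row (mat (d * d) (d * d) (\<lambda>(r, q). Rm d (transpose_mat g) $$ (r, sw d q)))"
      "q < dim_col (mat (d * d) (d * d) (\<lambda>(r, q). Rm d (transpose_mat g) $$ (r, sw d q)))"
    then have r: "r < d*d" and q: "q < d*d" by auto
    note sr = sw_props[OF r] and sq = sw_props[OF q] and dr = divmod_lt[OF r] and dq = divmod_lt[OF q]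
    have "mat (d * d) (d * d) (\<lambda>(r, q). Lm d g $$ (sw d r, q)) $$ (r, q) = Lm d g $$ (sw d r, q)"
      using r q by simp
    also have "\<dots> = g $$ (r mod d, q div d) * (if r div d = q mod d then 1 else 0)"
      using sr(1,2,3) q by (simp add: Lm_def)
    also have "\<dots> = (if r div d = q mod d then 1 else 0) * transpose_mat g $$ (q div d, r mod d)"
      using g dr dq by simp
    also have "\<dots> = Rm d (transpose_mat g) $$ (r, sw d q)"
      using sq(1,2,3) r by (simp add: Rm_def)
    also have "\<dots> = mat (d * d) (d * d) (\<lambda>(r, q). Rm d (transpose_mat g) $$ (r, sw d q)) $$ (r, q)"
      using r q by simp
    finally show "mat (d * d) (d * d) (\<lambda>(r, q). Lm d g $$ (sw d r, q)) $$ (r, q) =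
         mat (d * d) (d * d) (\<lambda>(r, q). Rm d (transpose_mat g) $$ (r, sw d q)) $$ (r, q)" .
  qed auto
  have "det (Pm d) * det (Lm d g) = det (Pm d * Lm d g)" using det_mult[OF P L] by simp
  also have "\<dots> = det (Rm d (transpose_mat g) * Pm d)" using comm by simp
  also have "\<dots> = det (Rm d (transpose_mat g)) * det (Pm d)" by (rule det_mult[OF R P])
  finally have "det (Pm d) * det (Lm d g) = det (Pm d) * det (Rm d (transpose_mat g))"
    by (simp add: mult.commute)
  then have "det (Lm d g) = det (Rm d (transpose_mat g))" using P0 by simp
  also have "\<dots> = det g ^ d" using g by (simp add: det_Rm det_transpose)
  finally show ?thesis .
qed

lemma det_coords_conj:
  assumes g: "g \<in> carrier_mat d d" and h: "h \<in> carrier_mat d d" and gh: "g * h = 1\<^sub>m d"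
  shows "det_coords d (\<lambda>c. g * Eb d c * (h :: 'a::field mat)) = 1"
proof -
  have e1: "\<forall>c<d*d. Eb d c * h \<in> carrier_mat d d" using h by (metis Eb_carrier mult_carrier_mat)
  have "(\<lambda>c. g * Eb d c * h) = (\<lambda>c. g * (Eb d c * h))"
    using g h by (auto simp: fun_eq_iff assoc_mult_mat[of _ d d _ d _ d])
  then have "coordmat d (\<lambda>c. g * Eb d c * h) = Lm d g * (Rm d h * coordmat d (Eb d))"
    using coordmat_left[OF g e1] coordmat_right[OF h, of "Eb d"] by simp
  also have "\<dots> = Lm d g * Rm d h" by (simp add: coordmat_Eb Rm_def)
  finally have "det_coords d (\<lambda>c. g * Eb d c * h) = det (Lm d g) * det (Rm d h)"
    unfolding det_coords_coordmat by (simp add: det_mult[of _ "d*d"] Lm_def Rm_def)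
  also have "\<dots> = (det g * det h) ^ d" using g h by (simp add: det_Lm det_Rm power_mult_distrib)
  also have "det g * det h = 1" using det_mult[OF g h] gh by simp
  finally show ?thesis by simp
qed


lemma det_shift_poly:
  assumes X: "X \<in> carrier_mat d d"
  shows "finite {t. det (X + t \<cdot>\<^sub>m 1\<^sub>m d) = (0::'a::field_char_0)}"
proof -
  have cp: "char_poly X \<noteq> 0"
  proof
    assume "char_poly X = 0"
    then show False using degree_monic_char_poly[OF X] by simp
  qed
  have sub: "{t. det (X + t \<cdot>\<^sub>m 1\<^sub>m d) = 0} \<subseteq> uminus ` {s. poly (char_poly X) s = 0}"
  proof
    fix t assume "t \<in> {t. det (X + t \<cdot>\<^sub>m 1\<^sub>m d) = 0}"
    then have t0: "det (X + t \<cdot>\<^sub>m 1\<^sub>m d) = 0" by simp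
    have cm: "char_matrix X (-t) = X + t \<cdot>\<^sub>m 1\<^sub>m d" using X by (simp add: char_matrix_def)
    have "- (X + t \<cdot>\<^sub>m 1\<^sub>m d) = (-1) \<cdot>\<^sub>m (X + t \<cdot>\<^sub>m 1\<^sub>m d)"
      using X by (intro eq_matI) auto
    then have "poly (char_poly X) (-t) = (-1) ^ d * det (X + t \<cdot>\<^sub>m 1\<^sub>m d)"
      using char_poly_matrix[OF X, of "-t"] X by (simp add: cm)
    then have "poly (char_poly X) (-t) = 0" using t0 by simp
    then show "t \<in> uminus ` {s. poly (char_poly X) s = 0}" by (auto intro: image_eqI[of _ _ "-t"])
  qed
  show ?thesis by (rule finite_subset[OF sub]) (use poly_roots_finite[OF cp] in auto)
qed

lemma det_nonzero_inverse:
  assumes g: "g \<in> carrier_mat d d" and "det g \<noteq> (0::'a::field)"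
  shows "\<exists>h. h \<in> carrier_mat d d \<and> g * h = 1\<^sub>m d \<and> h * g = 1\<^sub>m d"
proof -
  have "g \<in> Units (ring_mat TYPE('a) d ())" by (rule det_non_zero_imp_unit[OF assms])
  then show ?thesis unfolding Units_def by (auto simp: ring_mat_simps)
qed

lemma density:
  fixes T :: "nat list \<Rightarrow> nat list \<Rightarrow> 'a::field_char_0"
  assumes inv: "\<And>g h. g \<in> carrier_mat d d \<Longrightarrow> h \<in> carrier_mat d d \<Longrightarrow> g * h = 1\<^sub>m d \<Longrightarrow> h * g = 1\<^sub>m d \<Longrightarrow>
      \<forall>x\<in>idx d n. \<forall>y\<in>idx d n. tmul d n (tpow n g) T x y = tmul d n T (tpow n g) x y"
    and X: "X \<in> carrier_mat d d" and x: "x \<in> idx d n" and y: "y \<in> idx d n"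
  shows "tmul d n (tpow n X) T x y = tmul d n T (tpow n X) x y"
proof -
  define PP where "PP z w = (\<Prod>k<n. [:X $$ (z!k, w!k), (if z!k = w!k then 1 else 0):])" for z w
  have PPe: "poly (PP z w) t = tpow n (X + t \<cdot>\<^sub>m 1\<^sub>m d) z w" if "z \<in> idx d n" "w \<in> idx d n" for z w t
    unfolding PP_def tpow_def poly_prod using that X
    by (intro prod.cong refl) (auto simp: idx_mem)
  have PP0: "poly (PP z w) 0 = tpow n X z w" if "z \<in> idx d n" "w \<in> idx d n" for z w
    unfolding PP_def tpow_def poly_prod by simp
  define QQ where "QQ = (\<Sum>z\<in>idx d n. PP x z * [:T z y:]) - (\<Sum>z\<in>idx d n. [:T x z:] * PP z y)"
  have Qe: "poly QQ t = tmul d n (tpow n (X + t \<cdot>\<^sub>m 1\<^sub>m d)) T x y - tmul d n T (tpow n (X + t \<cdot>\<^sub>m 1\<^sub>m d)) x y" for t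
    unfolding QQ_def tmul_def poly_diff poly_sum poly_mult using x y
    by (simp add: PPe)
  have Q0: "poly QQ 0 = tmul d n (tpow n X) T x y - tmul d n T (tpow n X) x y"
    unfolding QQ_def tmul_def poly_diff poly_sum poly_mult using x y
    by (simp add: PP0)
  have good: "poly QQ t = 0" if dz: "det (X + t \<cdot>\<^sub>m 1\<^sub>m d) \<noteq> 0" for t
  proof -
    have gc: "X + t \<cdot>\<^sub>m 1\<^sub>m d \<in> carrier_mat d d" using X by simp
    obtain h where "h \<in> carrier_mat d d" "(X + t \<cdot>\<^sub>m 1\<^sub>m d) * h = 1\<^sub>m d" "h * (X + t \<cdot>\<^sub>m 1\<^sub>m d) = 1\<^sub>m d"
      using det_nonzero_inverse[OF gc dz] by blast
    from inv[OF gc this] show ?thesis unfolding Qe using x y by simp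
  qed
  have "QQ = 0"
  proof (rule ccontr)
    assume "QQ \<noteq> 0"
    then have f1: "finite {t. poly QQ t = 0}" by (rule poly_roots_finite)
    have "UNIV \<subseteq> {t. poly QQ t = 0} \<union> {t. det (X + t \<cdot>\<^sub>m 1\<^sub>m d) = 0}" using good by auto
    then have "finite (UNIV :: 'a set)" using f1 det_shift_poly[OF X] by (meson finite_Un finite_subset)
    then show False using infinite_UNIV_char_0 by blast
  qed
  then show ?thesis using Q0 by simp
qed


lemma ryser:
  fixes z :: "nat \<Rightarrow> nat \<Rightarrow> 'a::comm_ring_1" and n :: nat
  shows "(\<Sum>\<sigma>\<in>{\<sigma>. \<sigma> permutes {..<n}}. \<Prod>k<n. z (\<sigma> k) k)
       = (\<Sum>S\<in>Pow {..<n}. (-1) ^ (n - card S) * (\<Prod>k<n. \<Sum>i\<in>S. z i k))"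
proof -
  define f where "f U = (\<Sum>g\<in>{g\<in>PiE {..<n} (\<lambda>_. U). g ` {..<n} = U}. \<Prod>k<n. z (g k) k)" for U
  define G where "G S = (\<Prod>k<n. \<Sum>i\<in>S. z i k)" for S
  have GS: "G S = sum f (Pow S)" if fin: "finite S" for S
  proof -
    have "G S = (\<Sum>g\<in>PiE {..<n} (\<lambda>_. S). \<Prod>k<n. z (g k) k)"
      unfolding G_def using fin by (subst prod_sum_PiE) auto
    also have "\<dots> = (\<Sum>U\<in>Pow S. \<Sum>g\<in>{g\<in>PiE {..<n} (\<lambda>_. S). g ` {..<n} = U}. \<Prod>k<n. z (g k) k)"
      by (rule sum.group[symmetric]) (use fin in \<open>auto intro!: finite_PiE\<close>)
    also have "\<dots> = sum f (Pow S)"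
    proof (rule sum.cong[OF refl])
      fix U assume "U \<in> Pow S"
      then have "{g\<in>PiE {..<n} (\<lambda>_. S). g ` {..<n} = U} = {g\<in>PiE {..<n} (\<lambda>_. U). g ` {..<n} = U}"
        by (auto simp: PiE_def Pi_def)
      then show "(\<Sum>g\<in>{g\<in>PiE {..<n} (\<lambda>_. S). g ` {..<n} = U}. \<Prod>k<n. z (g k) k) = f U"
        unfolding f_def by simp
    qed
    finally show ?thesis .
  qed
  have "f {..<n} = (\<Sum>T\<in>Pow {..<n}. (-1) ^ (card {..<n} - card T) * G T)"
    by (rule inclusion_exclusion_mobius) (use GS in auto)
  then have fe: "f {..<n} = (\<Sum>T\<in>Pow {..<n}. (-1) ^ (n - card T) * G T)" by simp
  have "{g\<in>PiE {..<n} (\<lambda>_. {..<n}). g ` {..<n} = {..<n}} = {g\<in>PiE {..<n} (\<lambda>_. {..<n}). inj_on g {..<n}}"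
  proof (rule subset_antisym; rule subsetI)
    fix g assume "g \<in> {g\<in>PiE {..<n} (\<lambda>_. {..<n}). g ` {..<n} = {..<n}}"
    then show "g \<in> {g\<in>PiE {..<n} (\<lambda>_. {..<n}). inj_on g {..<n}}"
      by (auto intro: eq_card_imp_inj_on)
  next
    fix g assume g: "g \<in> {g\<in>PiE {..<n} (\<lambda>_. {..<n}). inj_on g {..<n}}"
    then have "g ` {..<n} = {..<n}" by (intro endo_inj_surj) auto
    then show "g \<in> {g\<in>PiE {..<n} (\<lambda>_. {..<n}). g ` {..<n} = {..<n}}" using g by auto
  qed
  then have "f {..<n} = (\<Sum>g\<in>{g\<in>PiE {..<n} (\<lambda>_. {..<n}). inj_on g {..<n}}. \<Prod>k<n. z (g k) k)"
    unfolding f_def by simp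
  also have "\<dots> = (\<Sum>\<sigma>\<in>{\<sigma>. \<sigma> permutes {..<n}}. \<Prod>k<n. z (restrict \<sigma> {..<n} k) k)"
    by (rule sum_PiE_perm)
  also have "\<dots> = (\<Sum>\<sigma>\<in>{\<sigma>. \<sigma> permutes {..<n}}. \<Prod>k<n. z (\<sigma> k) k)"
    by (intro sum.cong refl prod.cong) auto
  finally show ?thesis using fe unfolding G_def by simp
qed

definition Sy :: "nat \<Rightarrow> nat list \<Rightarrow> nat list \<Rightarrow> nat list \<Rightarrow> nat list \<Rightarrow> 'a::comm_ring_1" where
  "Sy n a b x y = (\<Sum>\<sigma>\<in>{\<sigma>. \<sigma> permutes {..<n}}. if x = act n \<sigma> a \<and> y = act n \<sigma> b then 1 else 0)"

definition Msum :: "nat \<Rightarrow> nat list \<Rightarrow> nat list \<Rightarrow> nat set \<Rightarrow> 'a::comm_ring_1 mat" where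
  "Msum d a b S = mat d d (\<lambda>(i,j). \<Sum>i'\<in>S. if i = a ! i' \<and> j = b ! i' then 1 else 0)"

lemma Sy_tpow:
  assumes x: "x \<in> idx d n" and y: "y \<in> idx d n"
  shows "Sy n a b x y = (\<Sum>S\<in>Pow {..<n}. (-1) ^ (n - card S) * tpow n (Msum d a b S) x y)"
proof -
  define z where "z i k = (if x ! k = a ! i \<and> y ! k = b ! i then 1 else (0::'a))" for i k
  have "Sy n a b x y = (\<Sum>\<sigma>\<in>{\<sigma>. \<sigma> permutes {..<n}}. \<Prod>k<n. z (\<sigma> k) k)"
    unfolding Sy_def
  proof (intro sum.cong refl)
    fix \<sigma> assume "\<sigma> \<in> {\<sigma>. \<sigma> permutes {..<n}}"
    have lx: "length x = n" "length y = n" using x y by (auto simp: idx_mem)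
    show "(if x = act n \<sigma> a \<and> y = act n \<sigma> b then 1 else 0) = (\<Prod>k<n. z (\<sigma> k) k)"
    proof (cases "x = act n \<sigma> a \<and> y = act n \<sigma> b")
      case True
      then show ?thesis unfolding z_def by (auto intro!: prod.neutral)
    next
      case False
      then obtain k where "k < n" "\<not> (x ! k = a ! \<sigma> k \<and> y ! k = b ! \<sigma> k)"
        using lx by (metis act_length act_nth nth_equalityI)
      then have "(\<Prod>k<n. z (\<sigma> k) k) = 0" unfolding z_def by (intro prod_zero) auto
      then show ?thesis using False by simp
    qed
  qed
  also have "\<dots> = (\<Sum>S\<in>Pow {..<n}. (-1) ^ (n - card S) * (\<Prod>k<n. \<Sum>i\<in>S. z i k))"
    by (rule ryser)
  also have "\<dots> = (\<Sum>S\<in>Pow {..<n}. (-1) ^ (n - card S) * tpow n (Msum d a b S) x y)"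
    unfolding tpow_def Msum_def z_def using x y
    by (intro sum.cong refl arg_cong2[where f="(*)"] prod.cong) (auto simp: idx_mem)
  finally show ?thesis .
qed

lemma comm_Sy:
  assumes comm: "\<And>X. X \<in> carrier_mat d d \<Longrightarrow> \<forall>x\<in>idx d n. \<forall>y\<in>idx d n.
      tmul d n (tpow n X) T x y = tmul d n T (tpow n X) x y"
    and x: "x \<in> idx d n" and y: "y \<in> idx d n"
  shows "tmul d n (Sy n a b) T x y = tmul d n T (Sy n a b) x y"
proof -
  let ?c = "\<lambda>S. (-1) ^ (n - card S) :: 'a"
  let ?A = "\<lambda>S. tpow n (Msum d a b S)"
  have "tmul d n (Sy n a b) T x y = tmul d n (\<lambda>u v. \<Sum>S\<in>Pow {..<n}. ?c S * ?A S u v) T x y"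
    using x by (intro tmul_cong) (auto simp: Sy_tpow)
  also have "\<dots> = (\<Sum>S\<in>Pow {..<n}. ?c S * tmul d n (?A S) T x y)" by (rule tmul_sum_left)
  also have "\<dots> = (\<Sum>S\<in>Pow {..<n}. ?c S * tmul d n T (?A S) x y)"
    using comm x y by (intro sum.cong refl) (auto simp: Msum_def)
  also have "\<dots> = tmul d n T (\<lambda>u v. \<Sum>S\<in>Pow {..<n}. ?c S * ?A S u v) x y" by (rule tmul_sum_right[symmetric])
  also have "\<dots> = tmul d n T (Sy n a b) x y"
    using y by (intro tmul_cong) (auto simp: Sy_tpow)
  finally show ?thesis .
qed

lemma sym_decomp:
  fixes Y :: "nat list \<Rightarrow> nat list \<Rightarrow> 'a::field_char_0"
  assumes sym: "\<And>\<sigma> a b. \<sigma> permutes {..<n} \<Longrightarrow> a \<in> idx d n \<Longrightarrow> b \<in> idx d n \<Longrightarrow> Y (act n \<sigma> a) (act n \<sigma> b) = Y a b"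
    and x: "x \<in> idx d n" and y: "y \<in> idx d n"
  shows "Y x y = (\<Sum>p\<in>idx d n \<times> idx d n. (Y (fst p) (snd p) / fact n) * Sy n (fst p) (snd p) x y)"
proof -
  let ?P = "{\<sigma>. \<sigma> permutes {..<n}}"
  have lx: "length x = n" "length y = n" using x y by (auto simp: idx_mem)
  have "(\<Sum>p\<in>idx d n \<times> idx d n. Y (fst p) (snd p) * Sy n (fst p) (snd p) x y)
      = (\<Sum>p\<in>idx d n \<times> idx d n. \<Sum>\<sigma>\<in>?P. if fst p = act n (Hilbert_Choice.inv \<sigma>) x \<and> snd p = act n (Hilbert_Choice.inv \<sigma>) y then Y (fst p) (snd p) else 0)"
  proof (intro sum.cong refl)
    fix p assume p: "p \<in> idx d n \<times> idx d n"
    then have lp: "length (fst p) = n" "length (snd p) = n" by (auto simp: idx_mem)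
    show "Y (fst p) (snd p) * Sy n (fst p) (snd p) x y = (\<Sum>\<sigma>\<in>?P. if fst p = act n (Hilbert_Choice.inv \<sigma>) x \<and> snd p = act n (Hilbert_Choice.inv \<sigma>) y then Y (fst p) (snd p) else 0)"
      unfolding Sy_def sum_distrib_left using lx lp
      by (intro sum.cong refl) (auto simp: act_inv_eq)
  qed
  also have "\<dots> = (\<Sum>\<sigma>\<in>?P. \<Sum>p\<in>idx d n \<times> idx d n. if p = (act n (Hilbert_Choice.inv \<sigma>) x, act n (Hilbert_Choice.inv \<sigma>) y) then Y (fst p) (snd p) else 0)"
    by (subst sum.swap) (simp add: prod_eq_iff)
  also have "\<dots> = (\<Sum>\<sigma>\<in>?P. Y x y)"
  proof (intro sum.cong refl)
    fix \<sigma> assume "\<sigma> \<in> ?P"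
    then have s: "Hilbert_Choice.inv \<sigma> permutes {..<n}" by (simp add: permutes_inv)
    have m: "(act n (Hilbert_Choice.inv \<sigma>) x, act n (Hilbert_Choice.inv \<sigma>) y) \<in> idx d n \<times> idx d n"
      using act_idx[OF s x] act_idx[OF s y] by simp
    show "(\<Sum>p\<in>idx d n \<times> idx d n. if p = (act n (Hilbert_Choice.inv \<sigma>) x, act n (Hilbert_Choice.inv \<sigma>) y) then Y (fst p) (snd p) else 0) = Y x y"
      using m sym[OF s x y] by simp
  qed
  also have "\<dots> = fact n * Y x y" using card_permutations[of "{..<n}" n] by simp
  finally have e: "(\<Sum>p\<in>idx d n \<times> idx d n. Y (fst p) (snd p) * Sy n (fst p) (snd p) x y) = fact n * Y x y" .
  have "(\<Sum>p\<in>idx d n \<times> idx d n. (Y (fst p) (snd p) / fact n) * Sy n (fst p) (snd p) x y)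
      = (\<Sum>p\<in>idx d n \<times> idx d n. Y (fst p) (snd p) * Sy n (fst p) (snd p) x y) / fact n"
    by (simp add: sum_divide_distrib)
  also have "\<dots> = Y x y" unfolding e by simp
  finally show ?thesis by simp
qed

lemma comm_sym:
  fixes Y T :: "nat list \<Rightarrow> nat list \<Rightarrow> 'a::field_char_0"
  assumes comm: "\<And>X. X \<in> carrier_mat d d \<Longrightarrow> \<forall>x\<in>idx d n. \<forall>y\<in>idx d n.
      tmul d n (tpow n X) T x y = tmul d n T (tpow n X) x y"
    and sym: "\<And>\<sigma> a b. \<sigma> permutes {..<n} \<Longrightarrow> a \<in> idx d n \<Longrightarrow> b \<in> idx d n \<Longrightarrow> Y (act n \<sigma> a) (act n \<sigma> b) = Y a b"
    and x: "x \<in> idx d n" and y: "y \<in> idx d n"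
  shows "tmul d n Y T x y = tmul d n T Y x y"
proof -
  let ?I = "idx d n \<times> idx d n"
  let ?c = "\<lambda>p. Y (fst p) (snd p) / fact n"
  let ?A = "\<lambda>p. Sy n (fst p) (snd p) :: nat list \<Rightarrow> nat list \<Rightarrow> 'a"
  have dec: "Y u v = (\<Sum>p\<in>?I. ?c p * ?A p u v)" if uv: "u \<in> idx d n" "v \<in> idx d n" for u v
    by (rule sym_decomp[OF _ uv]) (rule sym)
  have "tmul d n Y T x y = tmul d n (\<lambda>u v. \<Sum>p\<in>?I. ?c p * ?A p u v) T x y"
  proof (rule tmul_cong)
    show "\<forall>z\<in>idx d n. Y x z = (\<lambda>u v. \<Sum>p\<in>?I. ?c p * ?A p u v) x z"
    proof
      fix z assume z: "z \<in> idx d n"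
      show "Y x z = (\<lambda>u v. \<Sum>p\<in>?I. ?c p * ?A p u v) x z" using dec[OF x z] by (simp only:)
    qed
  qed simp
  also have "\<dots> = (\<Sum>p\<in>?I. ?c p * tmul d n (?A p) T x y)" by (rule tmul_sum_left)
  also have "\<dots> = (\<Sum>p\<in>?I. ?c p * tmul d n T (?A p) x y)"
    using comm_Sy[OF comm x y] by simp
  also have "\<dots> = tmul d n T (\<lambda>u v. \<Sum>p\<in>?I. ?c p * ?A p u v) x y" by (rule tmul_sum_right[symmetric])
  also have "\<dots> = tmul d n T Y x y"
  proof (rule tmul_cong)
    show "\<forall>z\<in>idx d n. (\<lambda>u v. \<Sum>p\<in>?I. ?c p * ?A p u v) z y = Y z y"
    proof
      fix z assume z: "z \<in> idx d n"
      show "(\<lambda>u v. \<Sum>p\<in>?I. ?c p * ?A p u v) z y = Y z y" using dec[OF z y] by (simp only:)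
    qed
  qed simp
  finally show ?thesis .
qed


definition lcomb :: "'i set \<Rightarrow> ('i \<Rightarrow> 'a::comm_ring_1) \<Rightarrow> ('i \<Rightarrow> 'x \<Rightarrow> 'y \<Rightarrow> 'a) \<Rightarrow> 'x \<Rightarrow> 'y \<Rightarrow> 'a" where
  "lcomb S c v = (\<lambda>a b. \<Sum>i\<in>S. c i * v i a b)"

definition islin :: "(('x \<Rightarrow> 'y \<Rightarrow> 'a::comm_ring_1) \<Rightarrow> ('x \<Rightarrow> 'y \<Rightarrow> 'a)) \<Rightarrow> bool" where
  "islin p \<longleftrightarrow> (\<forall>X Y. p (\<lambda>a b. X a b + Y a b) = (\<lambda>a b. p X a b + p Y a b)) \<and>
     (\<forall>c X. p (\<lambda>a b. c * X a b) = (\<lambda>a b. c * p X a b))"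

lemma islin_add: "islin p \<Longrightarrow> p (\<lambda>a b. X a b + Y a b) = (\<lambda>a b. p X a b + p Y a b)"
  unfolding islin_def by blast

lemma islin_scale: "islin p \<Longrightarrow> p (\<lambda>a b. c * X a b) = (\<lambda>a b. c * p X a b)"
  unfolding islin_def by blast

lemma islin_zero: "islin p \<Longrightarrow> p (\<lambda>a b. 0) = (\<lambda>a b. 0)"
  using islin_scale[of p 0 "\<lambda>a b. 0"] by simp

lemma islin_lcomb:
  assumes p: "islin p" and fin: "finite S"
  shows "p (lcomb S c v) = lcomb S c (\<lambda>i. p (v i))"
  using fin
proof (induct S rule: finite_induct)
  case empty
  then show ?case using islin_zero[OF p] by (simp add: lcomb_def)
next
  case (insert i S)
  have e: "lcomb (insert i S) c v = (\<lambda>a b. (\<lambda>a b. c i * v i a b) a b + lcomb S c v a b)"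
    using insert by (simp add: lcomb_def fun_eq_iff)
  have "p (lcomb (insert i S) c v) = (\<lambda>a b. p (\<lambda>a b. c i * v i a b) a b + p (lcomb S c v) a b)"
    unfolding e by (rule islin_add[OF p])
  also have "\<dots> = (\<lambda>a b. c i * p (v i) a b + lcomb S c (\<lambda>i. p (v i)) a b)"
    unfolding islin_scale[OF p] insert(3) ..
  also have "\<dots> = lcomb (insert i S) c (\<lambda>i. p (v i))"
    using insert by (simp add: lcomb_def fun_eq_iff)
  finally show ?case .
qed

lemma lcomb_cong: "(\<And>i. i \<in> S \<Longrightarrow> v i = w i) \<Longrightarrow> lcomb S c v = lcomb S c w"
  unfolding lcomb_def by (auto intro!: sum.cong)

lemma retraction:
  fixes v :: "'i \<Rightarrow> 'x \<Rightarrow> 'y \<Rightarrow> 'a::field"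
  assumes "finite S"
  shows "\<exists>p. islin p \<and> (\<forall>i\<in>S. p (v i) = v i) \<and> (\<forall>X. \<exists>c. p X = lcomb S c v)"
  using assms
proof (induct S rule: finite_induct)
  case empty
  show ?case
    by (rule exI[of _ "\<lambda>X a b. 0"]) (auto simp: islin_def lcomb_def)
next
  case (insert j S)
  from insert(3) obtain p where p: "islin p" "\<forall>i\<in>S. p (v i) = v i" "\<forall>X. \<exists>c. p X = lcomb S c v" by blast
  have ext0: "lcomb S c v = lcomb (insert j S) (c(j := 0)) v" for c
  proof -
    have "(\<Sum>i\<in>S. c i * v i a b) = (\<Sum>i\<in>S. (c(j := 0)) i * v i a b)" for a b
      using insert(2) by (intro sum.cong) auto
    then show ?thesis using insert(1,2) by (simp add: lcomb_def fun_eq_iff)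
  qed
  show ?case
  proof (cases "\<exists>c0. v j = lcomb S c0 v")
    case True
    then obtain c0 where c0: "v j = lcomb S c0 v" by blast
    have "p (v j) = v j"
    proof -
      have "p (v j) = lcomb S c0 (\<lambda>i. p (v i))" unfolding c0 by (rule islin_lcomb[OF p(1) insert(1)])
      also have "\<dots> = lcomb S c0 v" using p(2) by (intro lcomb_cong) auto
      finally show ?thesis using c0 by simp
    qed
    then have "\<forall>i\<in>insert j S. p (v i) = v i" using p(2) by auto
    moreover have "\<forall>X. \<exists>c. p X = lcomb (insert j S) c v" using p(3) ext0 by metis
    ultimately show ?thesis using p(1) by blast
  next
    case False
    define u where "u = (\<lambda>a b. v j a b - p (v j) a b)"
    obtain c2 where c2: "p (v j) = lcomb S c2 v" using p(3) by blast
    have "u \<noteq> (\<lambda>a b. 0)"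
    proof
      assume "u = (\<lambda>a b. 0)"
      then have "v j = p (v j)" unfolding u_def by (simp add: fun_eq_iff)
      then show False using False c2 by auto
    qed
    then obtain a0 b0 where u0: "u a0 b0 \<noteq> 0" by (auto simp: fun_eq_iff)
    define p' where "p' X = (\<lambda>a b. p X a b + ((X a0 b0 - p X a0 b0) / u a0 b0) * u a b)" for X
    have lin: "islin p'"
      unfolding islin_def p'_def islin_add[OF p(1)] islin_scale[OF p(1)]
      by (auto simp: fun_eq_iff algebra_simps add_divide_distrib diff_divide_distrib)
    have fixS: "\<forall>i\<in>S. p' (v i) = v i" using p(2) by (auto simp: p'_def)
    have fixj: "p' (v j) = v j" using u0 by (auto simp: p'_def u_def fun_eq_iff)
    have img: "\<exists>c. p' X = lcomb (insert j S) c v" for X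
    proof -
      obtain c where c: "p X = lcomb S c v" using p(3) by blast
      define l where "l = (X a0 b0 - p X a0 b0) / u a0 b0"
      define c' where "c' i = (if i = j then l else c i - l * c2 i)" for i
      have "p' X = lcomb (insert j S) c' v"
      proof (rule ext, rule ext)
        fix a b
        have sS: "(\<Sum>i\<in>S. c' i * v i a b) = (\<Sum>i\<in>S. c i * v i a b) - l * (\<Sum>i\<in>S. c2 i * v i a b)"
        proof -
          have "(\<Sum>i\<in>S. c' i * v i a b) = (\<Sum>i\<in>S. c i * v i a b - l * (c2 i * v i a b))"
            using insert(2) by (intro sum.cong) (auto simp: c'_def algebra_simps)
          then show ?thesis by (simp add: sum_subtractf sum_distrib_left)
        qed
        have "p' X a b = lcomb S c v a b + l * (v j a b - lcomb S c2 v a b)"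
          unfolding p'_def l_def u_def c[symmetric] c2[symmetric] by simp
        also have "\<dots> = lcomb (insert j S) c' v a b"
          using insert(1,2) sS by (simp add: lcomb_def c'_def algebra_simps)
        finally show "p' X a b = lcomb (insert j S) c' v a b" .
      qed
      then show ?thesis by blast
    qed
    show ?thesis using lin fixS fixj img by blast
  qed
qed


lemma tmul_assoc: "tmul d n (tmul d n A B) C = tmul d n A (tmul d n B C)"
  unfolding tmul_def by (auto simp: fun_eq_iff sum_distrib_left sum_distrib_right mult.assoc intro: sum.swap)

context fixes d n :: nat begin

definition Rs :: "(nat list \<Rightarrow> nat list \<Rightarrow> 'a::comm_ring_1) \<Rightarrow> nat list \<Rightarrow> nat list \<Rightarrow> 'a" where
  "Rs X = (\<lambda>a b. if a \<in> idx d n \<and> b \<in> idx d n then X a b else 0)"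

definition mm :: "(nat list \<Rightarrow> nat list \<Rightarrow> 'a::comm_ring_1) \<Rightarrow> (nat list \<Rightarrow> nat list \<Rightarrow> 'a) \<Rightarrow> nat list \<Rightarrow> nat list \<Rightarrow> 'a" where
  "mm X Y = Rs (tmul d n X Y)"

definition PO :: "(nat \<Rightarrow> nat) \<Rightarrow> nat list \<Rightarrow> nat list \<Rightarrow> 'a::comm_ring_1" where
  "PO \<sigma> = Rs (perm_op n \<sigma>)"

definition Em :: "nat list \<Rightarrow> nat list \<Rightarrow> nat list \<Rightarrow> nat list \<Rightarrow> 'a::comm_ring_1" where
  "Em b c = (\<lambda>x y. if x = b \<and> y = c then 1 else 0)"

lemma tmul_Rs_left: "a \<in> idx d n \<Longrightarrow> tmul d n (Rs X) Y a b = tmul d n X Y a b"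
  unfolding tmul_def Rs_def by (intro sum.cong) auto

lemma tmul_Rs_right: "b \<in> idx d n \<Longrightarrow> tmul d n X (Rs Y) a b = tmul d n X Y a b"
  unfolding tmul_def Rs_def by (intro sum.cong) auto

lemma mm_Rs_left: "mm (Rs X) Y = mm X Y"
  unfolding mm_def by (auto simp: fun_eq_iff tmul_Rs_left Rs_def[of "tmul d n _ _"])

lemma mm_Rs_right: "mm X (Rs Y) = mm X Y"
  unfolding mm_def by (auto simp: fun_eq_iff tmul_Rs_right Rs_def[of "tmul d n _ _"])

lemma mm_assoc: "mm (mm A B) C = mm A (mm B C)"
proof -
  have "mm (mm A B) C = mm (tmul d n A B) C" unfolding mm_def[of A B] by (rule mm_Rs_left)
  also have "\<dots> = mm A (tmul d n B C)" unfolding mm_def by (simp add: tmul_assoc)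
  also have "\<dots> = mm A (mm B C)" unfolding mm_def[of B C] by (rule mm_Rs_right[symmetric])
  finally show ?thesis .
qed

lemma mm_apply: "mm X Y a b = (if a \<in> idx d n \<and> b \<in> idx d n then tmul d n X Y a b else 0)"
  by (simp add: mm_def Rs_def)

lemma mm_PO:
  assumes s: "\<sigma> permutes {..<n}" and t: "\<tau> permutes {..<n}"
  shows "mm (PO \<sigma>) (PO \<tau>) = (PO (\<tau> \<circ> \<sigma>) :: nat list \<Rightarrow> nat list \<Rightarrow> 'a::comm_ring_1)"
proof (rule ext, rule ext)
  fix x y
  show "mm (PO \<sigma>) (PO \<tau>) x y = (PO (\<tau> \<circ> \<sigma>) :: nat list \<Rightarrow> nat list \<Rightarrow> 'a) x y"
  proof (cases "x \<in> idx d n \<and> y \<in> idx d n")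
    case True
    then have x: "x \<in> idx d n" and y: "y \<in> idx d n" by auto
    have lx: "length x = n" "length y = n" using x y by (auto simp: idx_mem)
    have si: "Hilbert_Choice.inv \<sigma> permutes {..<n}" using s by (rule permutes_inv)
    have "mm (PO \<sigma>) (PO \<tau>) x y = tmul d n (perm_op n \<sigma>) (perm_op n \<tau>) x y"
      unfolding PO_def mm_Rs_left mm_Rs_right mm_apply using True by simp
    also have "\<dots> = perm_op n \<tau> (act n (Hilbert_Choice.inv \<sigma>) x) y" by (rule tmul_perm_left[OF s x])
    also have "\<dots> = (if act n (Hilbert_Choice.inv \<sigma>) x = act n \<tau> y then 1 else 0)" by (simp add: perm_op_act)
    also have "(act n (Hilbert_Choice.inv \<sigma>) x = act n \<tau> y) = (x = act n \<sigma> (act n \<tau> y))"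
      using act_inv_eq[OF s, of x "act n \<tau> y"] lx by auto
    also have "act n \<sigma> (act n \<tau> y) = act n (\<tau> \<circ> \<sigma>) y" by (rule act_act[OF s])
    finally show ?thesis using True lx by (simp add: PO_def Rs_def perm_op_act)
  next
    case False
    then show ?thesis by (auto simp: mm_apply PO_def Rs_def)
  qed
qed

lemma Rs_Rs: "Rs (Rs X) = Rs X" by (auto simp: Rs_def fun_eq_iff)

lemma mm_PO_id_left: "mm (PO id) X = Rs X"
proof (rule ext, rule ext)
  fix x y
  show "mm (PO id) X x y = Rs X x y"
  proof (cases "x \<in> idx d n \<and> y \<in> idx d n")
    case True
    have "mm (PO id) X x y = tmul d n (perm_op n id) X x y"
      unfolding PO_def mm_Rs_left mm_apply using True by simp
    also have "\<dots> = X (act n (Hilbert_Choice.inv id) x) y" using True by (intro tmul_perm_left) auto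
    also have "\<dots> = X x y" using True by (simp add: inv_id act_id idx_mem)
    finally show ?thesis using True by (simp add: Rs_def)
  qed (auto simp: mm_apply Rs_def)
qed

lemma mm_PO_id_right: "mm X (PO id) = Rs X"
proof (rule ext, rule ext)
  fix x y
  show "mm X (PO id) x y = Rs X x y"
  proof (cases "x \<in> idx d n \<and> y \<in> idx d n")
    case True
    have "mm X (PO id) x y = tmul d n X (perm_op n id) x y"
      unfolding PO_def mm_Rs_right mm_apply using True by simp
    also have "\<dots> = X x (act n id y)" using True by (intro tmul_perm_right) auto
    also have "\<dots> = X x y" using True by (simp add: act_id idx_mem)
    finally show ?thesis using True by (simp add: Rs_def)
  qed (auto simp: mm_apply Rs_def)
qed

lemma mm_PO_apply:
  assumes s: "\<sigma> permutes {..<n}" and x: "x \<in> idx d n" and y: "y \<in> idx d n"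
  shows "mm (PO \<sigma>) Y x y = Y (act n (Hilbert_Choice.inv \<sigma>) x) y"
  unfolding PO_def mm_Rs_left mm_apply using x y tmul_perm_left[OF s x] by simp

lemma mm_PO_Em:
  assumes s: "\<sigma> permutes {..<n}" and b: "b \<in> idx d n"
  shows "mm (PO \<sigma>) (Em b c) = Rs (Em (act n \<sigma> b) c)"
proof (rule ext, rule ext)
  fix x y
  show "mm (PO \<sigma>) (Em b c) x y = Rs (Em (act n \<sigma> b) c) x y"
  proof (cases "x \<in> idx d n \<and> y \<in> idx d n")
    case True
    have lx: "length x = n" "length b = n" using True b by (auto simp: idx_mem)
    have "mm (PO \<sigma>) (Em b c) x y = Em b c (act n (Hilbert_Choice.inv \<sigma>) x) y"
      using True by (intro mm_PO_apply[OF s]) auto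
    also have "\<dots> = Em (act n \<sigma> b) c x y"
      using act_inv_eq[OF s, of x b] lx by (auto simp: Em_def)
    finally show ?thesis using True by (simp add: Rs_def)
  qed (auto simp: mm_apply Rs_def)
qed

lemma islin_mm: "islin (mm A)"
  unfolding islin_def mm_def tmul_def Rs_def
  by (auto simp: fun_eq_iff algebra_simps sum.distrib sum_distrib_left)

lemma mm_sum_right: "finite F \<Longrightarrow> mm A (\<lambda>a b. \<Sum>i\<in>F. f i a b) = (\<lambda>a b. \<Sum>i\<in>F. mm A (f i) a b)"
  unfolding mm_def tmul_def Rs_def
  by (auto simp: fun_eq_iff sum_distrib_left intro: sum.swap)

lemma mm_sum_left: "finite F \<Longrightarrow> mm (\<lambda>a b. \<Sum>i\<in>F. f i a b) A = (\<lambda>a b. \<Sum>i\<in>F. mm (f i) A a b)"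
  unfolding mm_def tmul_def Rs_def
  by (auto simp: fun_eq_iff sum_distrib_right intro: sum.swap)

lemma Rs_decomp: "Rs X = lcomb (idx d n \<times> idx d n) (\<lambda>q. X (fst q) (snd q)) (\<lambda>q. Em (fst q) (snd q))"
proof (rule ext, rule ext)
  fix x y
  have "lcomb (idx d n \<times> idx d n) (\<lambda>q. X (fst q) (snd q)) (\<lambda>q. Em (fst q) (snd q)) x y
      = (\<Sum>q\<in>idx d n \<times> idx d n. if q = (x, y) then X x y else 0)"
    unfolding lcomb_def Em_def by (intro sum.cong) auto
  also have "\<dots> = Rs X x y" by (simp add: Rs_def)
  finally show "Rs X x y = lcomb (idx d n \<times> idx d n) (\<lambda>q. X (fst q) (snd q)) (\<lambda>q. Em (fst q) (snd q)) x y" ..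
qed


lemma perm_reindex:
  assumes t: "\<tau> permutes {..<n}"
  shows "(\<Sum>\<sigma>\<in>{\<sigma>. \<sigma> permutes {..<n}}. F \<sigma>) = (\<Sum>\<rho>\<in>{\<sigma>. \<sigma> permutes {..<n}}. F (\<rho> \<circ> \<tau>))"
proof (rule sym, rule sum.reindex_bij_witness[where j = "\<lambda>\<rho>. \<rho> \<circ> \<tau>" and i = "\<lambda>\<sigma>. \<sigma> \<circ> Hilbert_Choice.inv \<tau>"])
  fix \<rho> assume "\<rho> \<in> {\<sigma>. \<sigma> permutes {..<n}}"
  show "\<rho> \<circ> \<tau> \<circ> Hilbert_Choice.inv \<tau> = \<rho>" using t by (simp add: o_assoc[symmetric] permutes_inv_o)
  show "\<rho> \<circ> \<tau> \<in> {\<sigma>. \<sigma> permutes {..<n}}" using t \<open>\<rho> \<in> _\<close> by (simp add: permutes_compose)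
next
  fix \<sigma> assume "\<sigma> \<in> {\<sigma>. \<sigma> permutes {..<n}}"
  show "\<sigma> \<circ> Hilbert_Choice.inv \<tau> \<circ> \<tau> = \<sigma>" using t by (simp add: o_assoc[symmetric] permutes_inv_o)
  show "\<sigma> \<circ> Hilbert_Choice.inv \<tau> \<in> {\<sigma>. \<sigma> permutes {..<n}}"
    using t \<open>\<sigma> \<in> _\<close> by (simp add: permutes_compose permutes_inv)
qed simp

lemma sum_prod_fst_snd: "(\<Sum>q\<in>A \<times> B. f (fst q) (snd q)) = (\<Sum>a\<in>A. \<Sum>b\<in>B. f a b)"
  by (simp add: sum.cartesian_product case_prod_beta)

definition piM :: "((nat list \<Rightarrow> nat list \<Rightarrow> 'a::comm_ring_1) \<Rightarrow> (nat list \<Rightarrow> nat list \<Rightarrow> 'a)) \<Rightarrow>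
    (nat list \<Rightarrow> nat list \<Rightarrow> 'a) \<Rightarrow> nat list \<Rightarrow> nat list \<Rightarrow> 'a" where
  "piM p X = (\<lambda>a b. \<Sum>\<sigma>\<in>{\<sigma>. \<sigma> permutes {..<n}}. mm (PO \<sigma>) (p (mm (PO (Hilbert_Choice.inv \<sigma>)) X)) a b)"

lemma piM_Rs: "piM p (Rs X) = piM p X"
  unfolding piM_def mm_Rs_right ..

lemma islin_piM: assumes p: "islin p" shows "islin (piM p)"
  unfolding islin_def piM_def
  by (simp add: islin_add[OF islin_mm] islin_add[OF p] islin_scale[OF islin_mm] islin_scale[OF p]
      sum.distrib sum_distrib_left)

lemma piM_equiv:
  assumes t: "\<tau> permutes {..<n}"
  shows "piM p (mm (PO \<tau>) X) = mm (PO \<tau>) (piM p X)"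
proof -
  let ?P = "{\<sigma>. \<sigma> permutes {..<n}}"
  let ?iv = "Hilbert_Choice.inv"
  have "piM p (mm (PO \<tau>) X) = (\<lambda>a b. \<Sum>\<sigma>\<in>?P. mm (PO \<sigma>) (p (mm (PO (\<tau> \<circ> ?iv \<sigma>)) X)) a b)"
    unfolding piM_def
  proof (intro ext sum.cong refl)
    fix a b \<sigma> assume "\<sigma> \<in> ?P"
    then have si: "?iv \<sigma> permutes {..<n}" by (simp add: permutes_inv)
    show "mm (PO \<sigma>) (p (mm (PO (?iv \<sigma>)) (mm (PO \<tau>) X))) a b = mm (PO \<sigma>) (p (mm (PO (\<tau> \<circ> ?iv \<sigma>)) X)) a b"
      unfolding mm_assoc[symmetric] mm_PO[OF si t] ..
  qed
  also have "\<dots> = (\<lambda>a b. \<Sum>\<rho>\<in>?P. mm (PO (\<rho> \<circ> \<tau>)) (p (mm (PO (\<tau> \<circ> ?iv (\<rho> \<circ> \<tau>))) X)) a b)"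
    by (intro ext perm_reindex[OF t])
  also have "\<dots> = (\<lambda>a b. \<Sum>\<rho>\<in>?P. mm (PO \<tau>) (mm (PO \<rho>) (p (mm (PO (?iv \<rho>)) X))) a b)"
  proof (intro ext sum.cong refl)
    fix a b \<rho> assume "\<rho> \<in> ?P"
    then have r: "\<rho> permutes {..<n}" by simp
    have "\<tau> \<circ> ?iv (\<rho> \<circ> \<tau>) = ?iv \<rho>"
      using r t by (simp add: o_inv_distrib permutes_bij o_assoc permutes_inv_o)
    then show "mm (PO (\<rho> \<circ> \<tau>)) (p (mm (PO (\<tau> \<circ> ?iv (\<rho> \<circ> \<tau>))) X)) a b = mm (PO \<tau>) (mm (PO \<rho>) (p (mm (PO (?iv \<rho>)) X))) a b"
      unfolding mm_assoc[symmetric] mm_PO[OF t r] by simp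
  qed
  also have "\<dots> = mm (PO \<tau>) (piM p X)"
    unfolding piM_def by (rule mm_sum_right[symmetric]) (simp add: finite_permutations)
  finally show ?thesis .
qed

lemma piM_span:
  assumes p: "islin p" and img: "\<forall>X. \<exists>c. p X = lcomb {\<sigma>. \<sigma> permutes {..<n}} c PO"
  shows "\<exists>c. piM p X = lcomb {\<sigma>. \<sigma> permutes {..<n}} c PO"
proof -
  let ?P = "{\<sigma>. \<sigma> permutes {..<n}}"
  let ?iv = "Hilbert_Choice.inv"
  define C where "C \<sigma> = (SOME c. p (mm (PO (?iv \<sigma>)) X) = lcomb ?P c PO)" for \<sigma>
  have C: "p (mm (PO (?iv \<sigma>)) X) = lcomb ?P (C \<sigma>) PO" for \<sigma>
  proof -
    from img obtain c0 where "p (mm (PO (?iv \<sigma>)) X) = lcomb ?P c0 PO" by blast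
    then show ?thesis unfolding C_def by (rule someI[where P = "\<lambda>c. p (mm (PO (?iv \<sigma>)) X) = lcomb ?P c PO"])
  qed
  have fP: "finite ?P" by (simp add: finite_permutations)
  have one: "mm (PO \<sigma>) (lcomb ?P (C \<sigma>) PO) = lcomb ?P (\<lambda>\<rho>. C \<sigma> (\<rho> \<circ> ?iv \<sigma>)) PO" if s: "\<sigma> \<in> ?P" for \<sigma>
  proof -
    have s': "\<sigma> permutes {..<n}" "?iv \<sigma> permutes {..<n}" using s by (auto simp: permutes_inv)
    have "mm (PO \<sigma>) (lcomb ?P (C \<sigma>) PO) = lcomb ?P (C \<sigma>) (\<lambda>\<tau>. mm (PO \<sigma>) (PO \<tau>))"
      by (rule islin_lcomb[OF islin_mm fP])
    also have "\<dots> = lcomb ?P (C \<sigma>) (\<lambda>\<tau>. PO (\<tau> \<circ> \<sigma>))"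
      using s' by (intro lcomb_cong) (simp add: mm_PO)
    also have "\<dots> = lcomb ?P (\<lambda>\<rho>. C \<sigma> (\<rho> \<circ> ?iv \<sigma>)) PO"
      unfolding lcomb_def
    proof (intro ext)
      fix a b
      show "(\<Sum>\<tau>\<in>?P. C \<sigma> \<tau> * PO (\<tau> \<circ> \<sigma>) a b) = (\<Sum>\<rho>\<in>?P. C \<sigma> (\<rho> \<circ> ?iv \<sigma>) * PO \<rho> a b)"
        by (subst perm_reindex[OF s'(2)]) (simp add: o_assoc[symmetric] permutes_inv_o[OF s'(1)])
    qed
    finally show ?thesis .
  qed
  have "piM p X = (\<lambda>a b. \<Sum>\<sigma>\<in>?P. lcomb ?P (\<lambda>\<rho>. C \<sigma> (\<rho> \<circ> ?iv \<sigma>)) PO a b)"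
    unfolding piM_def C using one by (intro ext sum.cong refl) auto
  also have "\<dots> = lcomb ?P (\<lambda>\<rho>. \<Sum>\<sigma>\<in>?P. C \<sigma> (\<rho> \<circ> ?iv \<sigma>)) PO"
    unfolding lcomb_def by (auto simp: fun_eq_iff sum_distrib_right intro: sum.swap)
  finally show ?thesis by blast
qed

lemma piM_id:
  assumes fx: "\<forall>\<sigma>\<in>{\<sigma>. \<sigma> permutes {..<n}}. p (PO \<sigma>) = PO \<sigma>"
  shows "piM p (PO id) = (\<lambda>a b. of_nat (fact n) * PO id a b)"
proof -
  let ?P = "{\<sigma>. \<sigma> permutes {..<n}}"
  have "piM p (PO id) = (\<lambda>a b. \<Sum>\<sigma>\<in>?P. PO id a b)"
    unfolding piM_def
  proof (intro ext sum.cong refl)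
    fix a b \<sigma> assume "\<sigma> \<in> ?P"
    then have s: "\<sigma> permutes {..<n}" "Hilbert_Choice.inv \<sigma> permutes {..<n}" by (auto simp: permutes_inv)
    have e1: "mm (PO (Hilbert_Choice.inv \<sigma>)) (PO id) = PO (Hilbert_Choice.inv \<sigma>)"
      using mm_PO[OF s(2) permutes_id] by simp
    have e2: "p (PO (Hilbert_Choice.inv \<sigma>)) = PO (Hilbert_Choice.inv \<sigma>)" using fx s(2) by blast
    have e3: "mm (PO \<sigma>) (PO (Hilbert_Choice.inv \<sigma>)) = PO id"
      using mm_PO[OF s(1) s(2)] permutes_inv_o(2)[OF s(1)] by simp
    show "mm (PO \<sigma>) (p (mm (PO (Hilbert_Choice.inv \<sigma>)) (PO id))) a b = PO id a b"
      by (simp only: e1 e2 e3)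
  qed
  also have "\<dots> = (\<lambda>a b. of_nat (fact n) * PO id a b)"
    using card_permutations[of "{..<n}" n] by simp
  finally show ?thesis .
qed

lemma piM_outside: "\<not> (a \<in> idx d n \<and> b \<in> idx d n) \<Longrightarrow> piM p X a b = 0"
  unfolding piM_def by (auto simp: mm_apply)

lemma piM_key:
  fixes T :: "nat list \<Rightarrow> nat list \<Rightarrow> 'a::field"
  assumes p: "islin p"
    and H: "\<And>Y. (\<And>\<sigma> a b. \<sigma> permutes {..<n} \<Longrightarrow> a \<in> idx d n \<Longrightarrow> b \<in> idx d n \<Longrightarrow> Y (act n \<sigma> a) (act n \<sigma> b) = Y a b)
       \<Longrightarrow> \<forall>x\<in>idx d n. \<forall>y\<in>idx d n. tmul d n T Y x y = tmul d n Y T x y"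
  shows "mm T (piM p X) = piM p (mm T X)"
proof (intro ext)
  fix x c'
  let ?I = "idx d n"
  let ?Pi = "\<lambda>z c. piM p (Em z c) x c'"
  have dec: "piM p Z = lcomb (?I \<times> ?I) (\<lambda>q. Z (fst q) (snd q)) (\<lambda>q. piM p (Em (fst q) (snd q)))" for Z
  proof -
    have "piM p Z = piM p (Rs Z)" by (rule piM_Rs[symmetric])
    also have "\<dots> = lcomb (?I \<times> ?I) (\<lambda>q. Z (fst q) (snd q)) (\<lambda>q. piM p (Em (fst q) (snd q)))"
      unfolding Rs_decomp by (rule islin_lcomb[OF islin_piM[OF p]]) simp
    finally show ?thesis .
  qed
  show "mm T (piM p X) x c' = piM p (mm T X) x c'"
  proof (cases "x \<in> ?I \<and> c' \<in> ?I")
    case False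
    have "mm T (piM p X) x c' = 0" unfolding mm_apply if_not_P[OF False] ..
    also have "\<dots> = piM p (mm T X) x c'" using piM_outside[OF False] by simp
    finally show ?thesis .
  next
    case True
    then have x: "x \<in> ?I" and c': "c' \<in> ?I" by auto
    define Y where "Y c = (\<lambda>u b. piM p (Em b c) u c')" for c
    have symY: "Y c (act n \<sigma> a) (act n \<sigma> b) = Y c a b"
      if s: "\<sigma> permutes {..<n}" and a: "a \<in> ?I" and b: "b \<in> ?I" for c \<sigma> a b
    proof -
      have "piM p (Em (act n \<sigma> b) c) = piM p (mm (PO \<sigma>) (Em b c))"
        unfolding mm_PO_Em[OF s b] piM_Rs ..
      also have "\<dots> = mm (PO \<sigma>) (piM p (Em b c))" by (rule piM_equiv[OF s])
      finally have "Y c (act n \<sigma> a) (act n \<sigma> b) = mm (PO \<sigma>) (piM p (Em b c)) (act n \<sigma> a) c'"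
        unfolding Y_def by simp
      also have "\<dots> = piM p (Em b c) (act n (Hilbert_Choice.inv \<sigma>) (act n \<sigma> a)) c'"
        by (rule mm_PO_apply[OF s act_idx[OF s a] c'])
      also have "act n (Hilbert_Choice.inv \<sigma>) (act n \<sigma> a) = a"
        using act_act[OF permutes_inv[OF s], of \<sigma> a] permutes_inv_o(1)[OF s] act_id[of a n] a
      by (simp add: idx_mem)
      finally show ?thesis unfolding Y_def by simp
    qed
    have comm: "tmul d n T (Y c) x b = tmul d n (Y c) T x b" if "b \<in> ?I" for c b
      using H[of "Y c", OF symY] x that by blast
    let ?pi = "\<lambda>z c. piM p (Em z c) x c'"
    have "mm T (piM p X) x c' = (\<Sum>z\<in>?I. T x z * (\<Sum>q\<in>?I \<times> ?I. X (fst q) (snd q) * piM p (Em (fst q) (snd q)) z c'))"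
      using True unfolding mm_apply tmul_def by (simp add: dec[of X] lcomb_def)
    also have "\<dots> = (\<Sum>z\<in>?I. \<Sum>q\<in>?I \<times> ?I. X (fst q) (snd q) * (T x z * piM p (Em (fst q) (snd q)) z c'))"
      by (simp add: sum_distrib_left mult.left_commute)
    also have "\<dots> = (\<Sum>q\<in>?I \<times> ?I. \<Sum>z\<in>?I. X (fst q) (snd q) * (T x z * piM p (Em (fst q) (snd q)) z c'))"
      by (rule sum.swap)
    also have "\<dots> = (\<Sum>q\<in>?I \<times> ?I. X (fst q) (snd q) * (\<Sum>z\<in>?I. T x z * Y (snd q) z (fst q)))"
      unfolding Y_def by (simp add: sum_distrib_left)
    also have "\<dots> = (\<Sum>q\<in>?I \<times> ?I. X (fst q) (snd q) * tmul d n T (Y (snd q)) x (fst q))"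
      unfolding tmul_def ..
    also have "\<dots> = (\<Sum>q\<in>?I \<times> ?I. X (fst q) (snd q) * tmul d n (Y (snd q)) T x (fst q))"
      using comm by (intro sum.cong refl) auto
    also have "\<dots> = (\<Sum>q\<in>?I \<times> ?I. X (fst q) (snd q) * (\<Sum>z\<in>?I. ?pi z (snd q) * T z (fst q)))"
      unfolding tmul_def Y_def ..
    also have "\<dots> = (\<Sum>b\<in>?I. \<Sum>c\<in>?I. X b c * (\<Sum>z\<in>?I. ?pi z c * T z b))"
      by (rule sum_prod_fst_snd)
    also have "\<dots> = (\<Sum>b\<in>?I. \<Sum>c\<in>?I. \<Sum>z\<in>?I. X b c * T z b * ?pi z c)"
    proof (intro sum.cong refl)
      fix b c
      show "X b c * (\<Sum>z\<in>?I. ?pi z c * T z b) = (\<Sum>z\<in>?I. X b c * T z b * ?pi z c)"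
        unfolding sum_distrib_left by (intro sum.cong refl) (simp add: ac_simps)
    qed
    also have "\<dots> = (\<Sum>c\<in>?I. \<Sum>b\<in>?I. \<Sum>z\<in>?I. X b c * T z b * ?pi z c)" by (rule sum.swap)
    also have "\<dots> = (\<Sum>c\<in>?I. \<Sum>z\<in>?I. \<Sum>b\<in>?I. X b c * T z b * ?pi z c)" by (intro sum.cong refl sum.swap)
    also have "\<dots> = (\<Sum>z\<in>?I. \<Sum>c\<in>?I. \<Sum>b\<in>?I. X b c * T z b * ?pi z c)" by (rule sum.swap)
    also have "\<dots> = (\<Sum>z\<in>?I. \<Sum>c\<in>?I. (\<Sum>b\<in>?I. T z b * X b c) * ?pi z c)"
    proof (intro sum.cong refl)
      fix z c
      show "(\<Sum>b\<in>?I. X b c * T z b * ?pi z c) = (\<Sum>b\<in>?I. T z b * X b c) * ?pi z c"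
        unfolding sum_distrib_right by (intro sum.cong refl) (simp add: ac_simps)
    qed
    also have "\<dots> = (\<Sum>q\<in>?I \<times> ?I. (\<Sum>b\<in>?I. T (fst q) b * X b (snd q)) * ?pi (fst q) (snd q))"
      by (rule sum_prod_fst_snd[symmetric])
    also have "\<dots> = (\<Sum>q\<in>?I \<times> ?I. mm T X (fst q) (snd q) * ?pi (fst q) (snd q))"
      by (intro sum.cong refl) (auto simp: mm_apply tmul_def)
    also have "\<dots> = piM p (mm T X) x c'"
      by (simp add: dec[of "mm T X"] lcomb_def)
    finally show ?thesis .
  qed
qed

lemma maschke:
  fixes T :: "nat list \<Rightarrow> nat list \<Rightarrow> 'a::field_char_0"
  assumes H: "\<And>Y. (\<And>\<sigma> a b. \<sigma> permutes {..<n} \<Longrightarrow> a \<in> idx d n \<Longrightarrow> b \<in> idx d n \<Longrightarrow> Y (act n \<sigma> a) (act n \<sigma> b) = Y a b)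
       \<Longrightarrow> \<forall>x\<in>idx d n. \<forall>y\<in>idx d n. tmul d n T Y x y = tmul d n Y T x y"
  shows "\<exists>c. \<forall>x\<in>idx d n. \<forall>y\<in>idx d n. T x y = (\<Sum>\<sigma>\<in>{\<sigma>. \<sigma> permutes {..<n}}. c \<sigma> * perm_op n \<sigma> x y)"
proof -
  let ?P = "{\<sigma>. \<sigma> permutes {..<n}}"
  have fP: "finite ?P" by (simp add: finite_permutations)
  have ex: "\<exists>p :: (nat list \<Rightarrow> nat list \<Rightarrow> 'a) \<Rightarrow> (nat list \<Rightarrow> nat list \<Rightarrow> 'a). islin p \<and> (\<forall>i\<in>?P. p (PO i) = PO i) \<and> (\<forall>X. \<exists>c. p X = lcomb ?P c PO)"
    by (rule retraction[OF fP])
  from ex obtain p :: "(nat list \<Rightarrow> nat list \<Rightarrow> 'a) \<Rightarrow> (nat list \<Rightarrow> nat list \<Rightarrow> 'a)" where p: "islin p" "\<forall>\<sigma>\<in>?P. p (PO \<sigma>) = PO \<sigma>" "\<forall>X. \<exists>c. p X = lcomb ?P c PO"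
    by blast
  obtain c where c: "piM p (Rs T) = lcomb ?P c PO" using piM_span[OF p(1) p(3), of "Rs T"] by (elim exE)
  have s1: "Rs T = mm T (PO id)" by (rule mm_PO_id_right[symmetric])
  have "piM p (Rs T) = piM p (mm T (PO id))" by (simp only: s1)
  also have "\<dots> = mm T (piM p (PO id))" by (rule piM_key[OF p(1) H, symmetric])
  also have "\<dots> = mm T (\<lambda>a b. of_nat (fact n) * PO id a b)" by (simp only: piM_id[OF p(2)])
  also have "\<dots> = (\<lambda>a b. of_nat (fact n) * mm T (PO id) a b)" by (rule islin_scale[OF islin_mm])
  also have "\<dots> = (\<lambda>a b. of_nat (fact n) * Rs T a b)" by (simp only: s1)
  finally have e0: "piM p (Rs T) = (\<lambda>a b. of_nat (fact n) * Rs T a b)" .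
  have e: "(\<lambda>a b. of_nat (fact n) * Rs T a b) = lcomb ?P c PO" by (rule trans[OF e0[symmetric] c])
  show ?thesis
  proof (intro exI ballI)
    fix x y assume x: "x \<in> idx d n" and y: "y \<in> idx d n"
    have "of_nat (fact n) * Rs T x y = lcomb ?P c PO x y"
      using fun_cong[OF fun_cong[OF e, of x], of y] by (simp only:)
    moreover have "Rs T x y = T x y" using x y by (simp add: Rs_def)
    moreover have "lcomb ?P c PO x y = (\<Sum>\<sigma>\<in>?P. c \<sigma> * perm_op n \<sigma> x y)"
      unfolding lcomb_def PO_def Rs_def using x y by simp
    ultimately have e2: "of_nat (fact n) * T x y = (\<Sum>\<sigma>\<in>?P. c \<sigma> * perm_op n \<sigma> x y)" by simp
    have nz: "(of_nat (fact n) :: 'a) \<noteq> 0" by simp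
    have "T x y = (of_nat (fact n) * T x y) / of_nat (fact n)" using nz by simp
    also have "\<dots> = (\<Sum>\<sigma>\<in>?P. c \<sigma> * perm_op n \<sigma> x y) / of_nat (fact n)" unfolding e2 ..
    also have "\<dots> = (\<Sum>\<sigma>\<in>?P. (c \<sigma> / of_nat (fact n)) * perm_op n \<sigma> x y)"
      unfolding sum_divide_distrib by (intro sum.cong refl) simp
    finally show "T x y = (\<Sum>\<sigma>\<in>?P. (c \<sigma> / of_nat (fact n)) * perm_op n \<sigma> x y)" .
  qed
qed

end


lemma word_mat_loc: "(\<forall>v\<in>set w. xs v = ys v) \<Longrightarrow> word_mat d xs w = word_mat d ys w"
  by (induct w) (auto simp: word_mat_def)

lemma teval_loc:
  assumes tp: "tensor_poly d n G" and eq: "\<forall>k<d*d. xs k = ys k"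
  shows "teval d n G xs = teval d n G ys"
proof -
  have "word_mat d xs (m ! k) = word_mat d ys (m ! k)" if "G m \<noteq> 0" "k < n" for m k
    using tensor_poly_letters[OF tp that] eq by (intro word_mat_loc) auto
  then show ?thesis unfolding teval_def by (auto simp: fun_eq_iff intro!: sum.cong prod.cong)
qed

lemma tmul_tpow_one_right:
  assumes y: "y \<in> idx d n"
  shows "tmul d n A (tpow n (1\<^sub>m d)) x y = A x y"
proof -
  have "tmul d n A (tpow n (1\<^sub>m d)) x y = (\<Sum>z\<in>idx d n. if z = y then A x z else 0)"
    unfolding tmul_def using y by (intro sum.cong refl) (auto simp: tpow_one)
  also have "\<dots> = A x y" using y by simp
  finally show ?thesis .
qed

theorem mainTheorem2:
  fixes G :: "nat list list \<Rightarrow> 'a::field_char_0"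
    and d n :: nat
  assumes "d \<ge> 1" and "n \<ge> 1"
    and "tensor_poly d n G"
    and "multilinear_alternating d n (teval d n G)"
  shows "\<exists>J :: nat list \<Rightarrow> nat list \<Rightarrow> 'a. GL_invariant d n J \<and> in_perm_span d n J \<and>
     (\<forall>xs. (\<forall>k<d*d. xs k \<in> carrier_mat d d) \<longrightarrow>
        (\<forall>is\<in>idx d n. \<forall>js\<in>idx d n. teval d n G xs is js = det_coords d xs * J is js))"
proof -
  note tp = assms(3) and mla = assms(4)
  let ?I = "idx d n"
  let ?P = "{\<sigma>. \<sigma> permutes {..<n}}"
  define J0 where "J0 = teval d n G (Eb d)"
  have la: "lin_alt d (\<lambda>xs. teval d n G xs x y)" if x: "x \<in> ?I" and y: "y \<in> ?I" for x y
    unfolding lin_alt_def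
  proof (intro conjI allI impI)
    fix xs :: "nat \<Rightarrow> 'a mat" and i :: nat and Y Z :: "'a mat" and a b :: 'a
    assume pr: "\<forall>k<d*d. xs k \<in> carrier_mat d d" "i < d * d" "Y \<in> carrier_mat d d" "Z \<in> carrier_mat d d"
    show "teval d n G (xs(i := a \<cdot>\<^sub>m Y + b \<cdot>\<^sub>m Z)) x y = a * teval d n G (xs(i := Y)) x y + b * teval d n G (xs(i := Z)) x y"
      by (rule mla[unfolded multilinear_alternating_def, THEN conjunct1, rule_format, OF pr(1)[rule_format] pr(2-4) x y])
  next
    fix xs :: "nat \<Rightarrow> 'a mat" and i j :: nat
    assume pr: "\<forall>k<d*d. xs k \<in> carrier_mat d d" "i < d * d" "j < d * d" "i \<noteq> j" "xs i = xs j"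
    show "teval d n G xs x y = 0"
      by (rule mla[unfolded multilinear_alternating_def, THEN conjunct2, rule_format, OF pr(1)[rule_format] pr(2-5) x y])
  next
    fix xs ys :: "nat \<Rightarrow> 'a mat"
    assume eq: "\<forall>k<d*d. xs k = ys k"
    show "teval d n G xs x y = teval d n G ys x y" by (simp only: teval_loc[OF tp eq])
  qed
  have detform: "teval d n G xs x y = det_coords d xs * J0 x y"
    if xs: "\<forall>k<d*d. xs k \<in> carrier_mat d d" and x: "x \<in> ?I" and y: "y \<in> ?I" for xs x y
    unfolding J0_def using la_det[OF la[OF x y] xs] .
  have glinv: "tmul d n (tmul d n (tpow n g) J0) (tpow n h) x y = J0 x y"
    if g: "g \<in> carrier_mat d d" and h: "h \<in> carrier_mat d d" and gh: "g * h = 1\<^sub>m d" and hg: "h * g = 1\<^sub>m d"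
      and x: "x \<in> ?I" and y: "y \<in> ?I" for g h x y
  proof -
    have Ec: "\<forall>k<d*d. Eb d k \<in> carrier_mat d d" by simp
    have c2: "\<forall>k<d*d. g * Eb d k * h \<in> carrier_mat d d" using g h by (auto intro!: mult_carrier_mat)
    have "tmul d n (tmul d n (tpow n g) J0) (tpow n h) x y = teval d n G (\<lambda>v. g * Eb d v * h) x y"
      unfolding J0_def by (rule teval_conj[OF tp Ec g h gh hg x y, symmetric])
    also have "\<dots> = det_coords d (\<lambda>v. g * Eb d v * h) * J0 x y" by (rule detform[OF c2 x y])
    also have "det_coords d (\<lambda>v. g * Eb d v * h) = 1" by (rule det_coords_conj[OF g h gh])
    finally show ?thesis by simp
  qed
  have commg: "\<forall>x\<in>?I. \<forall>y\<in>?I. tmul d n (tpow n g) J0 x y = tmul d n J0 (tpow n g) x y"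
    if g: "g \<in> carrier_mat d d" and h: "h \<in> carrier_mat d d" and gh: "g * h = 1\<^sub>m d" and hg: "h * g = 1\<^sub>m d" for g h
  proof (intro ballI)
    fix x y assume x: "x \<in> ?I" and y: "y \<in> ?I"
    have "tmul d n J0 (tpow n g) x y = tmul d n (tmul d n (tmul d n (tpow n g) J0) (tpow n h)) (tpow n g) x y"
      using glinv[OF g h gh hg x] by (intro tmul_cong) auto
    also have "\<dots> = tmul d n (tmul d n (tpow n g) J0) (tmul d n (tpow n h) (tpow n g)) x y"
      by (simp add: tmul_assoc)
    also have "\<dots> = tmul d n (tmul d n (tpow n g) J0) (tpow n (1\<^sub>m d)) x y"
    proof (rule tmul_cong)
      show "\<forall>z\<in>?I. tmul d n (tpow n h) (tpow n g) z y = tpow n (1\<^sub>m d) z y"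
        using g h y unfolding tpow_tens hg[symmetric] by (auto intro: tmul_tens)
    qed simp
    also have "\<dots> = tmul d n (tpow n g) J0 x y" by (rule tmul_tpow_one_right[OF y])
    finally show "tmul d n (tpow n g) J0 x y = tmul d n J0 (tpow n g) x y" by simp
  qed
  have commX: "\<forall>x\<in>?I. \<forall>y\<in>?I. tmul d n (tpow n X) J0 x y = tmul d n J0 (tpow n X) x y"
    if X: "X \<in> carrier_mat d d" for X
    by (intro ballI) (rule density[OF commg X])
  have H: "\<forall>x\<in>?I. \<forall>y\<in>?I. tmul d n J0 Y x y = tmul d n Y J0 x y"
    if sym: "\<And>\<sigma> a b. \<sigma> permutes {..<n} \<Longrightarrow> a \<in> ?I \<Longrightarrow> b \<in> ?I \<Longrightarrow> Y (act n \<sigma> a) (act n \<sigma> b) = Y a b" for Y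
  proof (intro ballI)
    fix x y assume x: "x \<in> ?I" and y: "y \<in> ?I"
    show "tmul d n J0 Y x y = tmul d n Y J0 x y"
      using comm_sym[of d n J0 Y x y, OF commX sym x y] by simp
  qed
  have exc: "\<exists>c. \<forall>x\<in>?I. \<forall>y\<in>?I. J0 x y = (\<Sum>\<sigma>\<in>?P. c \<sigma> * perm_op n \<sigma> x y)"
    by (rule maschke[of n d J0, OF H])
  then obtain c :: "(nat \<Rightarrow> nat) \<Rightarrow> 'a" where c: "\<forall>x\<in>?I. \<forall>y\<in>?I. J0 x y = (\<Sum>\<sigma>\<in>?P. c \<sigma> * perm_op n \<sigma> x y)"
    by (elim exE)
  define J where "J = (\<lambda>a b. \<Sum>\<sigma>\<in>?P. c \<sigma> * perm_op n \<sigma> a b :: 'a)"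
  have JJ0: "J x y = J0 x y" if "x \<in> ?I" "y \<in> ?I" for x y using c that by (simp add: J_def)
  have "GL_invariant d n J"
    unfolding GL_invariant_def
  proof (intro allI impI ballI)
    fix g h :: "'a mat" and x y :: "nat list"
    assume g: "g \<in> carrier_mat d d" and h: "h \<in> carrier_mat d d" and gh: "g * h = 1\<^sub>m d"
      and hg: "h * g = 1\<^sub>m d" and x: "x \<in> ?I" and y: "y \<in> ?I"
    have "tmul d n (tmul d n (tpow n g) J) (tpow n h) x y = tmul d n (tmul d n (tpow n g) J0) (tpow n h) x y"
    proof (rule tmul_cong)
      show "\<forall>z\<in>?I. tmul d n (tpow n g) J x z = tmul d n (tpow n g) J0 x z"
        using JJ0 by (auto intro!: tmul_cong)
    qed simp
    also have "\<dots> = J0 x y" by (rule glinv[OF g h gh hg x y])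
    finally show "tmul d n (tmul d n (tpow n g) J) (tpow n h) x y = J x y" using JJ0[OF x y] by simp
  qed
  moreover have "in_perm_span d n J" unfolding in_perm_span_def J_def by blast
  moreover have "\<forall>xs. (\<forall>k<d*d. xs k \<in> carrier_mat d d) \<longrightarrow>
        (\<forall>is\<in>?I. \<forall>js\<in>?I. teval d n G xs is js = det_coords d xs * J is js)"
  proof (intro allI impI ballI)
    fix xs :: "nat \<Rightarrow> 'a mat" and x y
    assume xs: "\<forall>k<d*d. xs k \<in> carrier_mat d d" and x: "x \<in> ?I" and y: "y \<in> ?I"
    show "teval d n G xs x y = det_coords d xs * J x y"
      unfolding detform[OF xs x y] JJ0[OF x y] ..
  qed
  ultimately show ?thesis by blast
qed


end
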